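(* Let $n\geq 3$ and let $\mathfrak{h}_{2n+1}=\mathfrak{g}_{-2}\oplus\mathfrak{g}_{-1}$ be the Heisenberg Lie algebra, where $\mathfrak{g}_{-2}$ is the one-dimensional centre and $[X,Y]=J(X\wedge Y)$ for $X,Y\in\mathfrak{g}_{-1}$ with $J:\Lambda^2\mathfrak{g}_{-1}\to\mathfrak{g}_{-2}$ a non-degenerate symplectic form. Let $\mathbb{V}$ be a representation of $\mathfrak{h}_{2n+1}$, and write $\eth_a$ for the action of $\mathfrak{g}_{-1}$ (so $Xv=X^a\eth_av$). Then for $r=0,1,2$ the Lie algebra cohomology $H^r(\mathfrak{h}_{2n+1},\mathbb{V})$ is isomorphic to the cohomology at the $r$-th term ($r=0$ being $\mathbb{V}$) of the complex $$0\to\mathbb{V}\xrightarrow{\partial}\mathrm{Hom}(\mathfrak{g}_{-1},\mathbb{V})\xrightarrow{\partial_\perp}\mathrm{Hom}(\Lambda^2_\perp\mathfrak{g}_{-1},\mathbb{V})\xrightarrow{\partial_\perp}\mathrm{Hom}(\Lambda^3_\perp\mathfrak{g}_{-1},\mathbb{V}),$$ where $\partial v=\eth_av$, $\partial_\perp v_a$ is the $J$-trace-free part of $\eth_{[a}v_{b]}$, and $\partial_\perp v_{ab}$ is the $J$-trace-free part of $\eth_{[a}v_{bc]}$.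
   Context: $\Lambda^k_\perp\mathfrak{g}_{-1}$ denotes the $k$-forms on $\mathfrak{g}_{-1}$ (i.e.\ elements of $\Lambda^k\mathfrak{g}_{-1}^*$, identified with $\mathrm{Hom}(\Lambda^k\mathfrak{g}_{-1},\cdot)$ via $\mathrm{Hom}(\Lambda^k_\perp\mathfrak{g}_{-1},\mathbb{V})=\Lambda^k_\perp\mathfrak{g}_{-1}^*\otimes\mathbb{V}$) that are trace-free with respect to the symplectic form, i.e.\ all contractions with the inverse symplectic form vanish; the trace-free part is the projection along the complement consisting of forms $J\wedge(\cdot)$. Lie algebra cohomology is computed by the usual Koszul (Chevalley--Eilenberg) complex $\Lambda^\bullet\mathfrak{h}_{2n+1}^*\otimes\mathbb{V}$. *)

theory Defs
  imports Complex_Main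
begin

text \<open>The Heisenberg algebra h_{2n+1} = g_{-2} + g_{-1} is taken with basis
  e_0,...,e_{2n-1} of g_{-1} and e_{2n} spanning the centre g_{-2}; the brackets are
  [e_a,e_b] = J a b e_{2n} for a,b < 2n, all others zero.  A representation on a real
  vector space 'v is given by the operators D a (the action of e_a, i.e. eth_a) and T
  (the action of e_{2n}).  V-valued k-forms (elements of Hom(Lambda^k,V)) are stored as
  functions on index lists, alternating, and zero off lists of length k with entries in range.\<close>

definition del :: "nat \<Rightarrow> 'b list \<Rightarrow> 'b list" where
  "del i xs = take i xs @ drop (Suc i) xs"

definition alt_form :: "nat \<Rightarrow> nat \<Rightarrow> (nat list \<Rightarrow> 'v::real_vector) \<Rightarrow> bool" where
  "alt_form N k \<omega> \<longleftrightarrow>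
     (\<forall>xs. (length xs \<noteq> k \<or> \<not> set xs \<subseteq> {..<N}) \<longrightarrow> \<omega> xs = 0) \<and>
     (\<forall>xs. \<not> distinct xs \<longrightarrow> \<omega> xs = 0) \<and>
     (\<forall>xs i j. i < length xs \<longrightarrow> j < length xs \<longrightarrow> i \<noteq> j \<longrightarrow>
         \<omega> (xs[i := xs ! j, j := xs ! i]) = - \<omega> xs)"

definition rho :: "nat \<Rightarrow> (nat \<Rightarrow> 'v \<Rightarrow> 'v) \<Rightarrow> ('v \<Rightarrow> 'v) \<Rightarrow> nat \<Rightarrow> 'v \<Rightarrow> 'v" where
  "rho n D T a = (if a < 2 * n then D a else T)"

definition Jh :: "nat \<Rightarrow> (nat \<Rightarrow> nat \<Rightarrow> real) \<Rightarrow> nat \<Rightarrow> nat \<Rightarrow> real" where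
  "Jh n J a b = (if a < 2 * n \<and> b < 2 * n then J a b else 0)"

definition ce_d :: "nat \<Rightarrow> (nat \<Rightarrow> nat \<Rightarrow> real) \<Rightarrow> (nat \<Rightarrow> 'v \<Rightarrow> 'v) \<Rightarrow> ('v \<Rightarrow> 'v)
    \<Rightarrow> (nat list \<Rightarrow> 'v::real_vector) \<Rightarrow> nat list \<Rightarrow> 'v" where
  "ce_d n J D T \<omega> xs =
     (if set xs \<subseteq> {..2 * n} then
        (\<Sum>i<length xs. ((-1::real) ^ i) *\<^sub>R rho n D T (xs ! i) (\<omega> (del i xs)))
      + (\<Sum>i<length xs. \<Sum>j<length xs. if i < j then
            ((-1::real) ^ (i + j) * Jh n J (xs ! i) (xs ! j)) *\<^sub>R \<omega> (2 * n # del i (del j xs))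
          else 0)
      else 0)"

definition ce_sp :: "nat \<Rightarrow> nat \<Rightarrow> (nat list \<Rightarrow> 'v::real_vector) set" where
  "ce_sp n r = {\<omega>. alt_form (Suc (2 * n)) r \<omega>}"

definition eth :: "nat \<Rightarrow> (nat \<Rightarrow> 'v \<Rightarrow> 'v) \<Rightarrow> (nat list \<Rightarrow> 'v::real_vector) \<Rightarrow> nat list \<Rightarrow> 'v" where
  "eth n D \<omega> xs =
     (if set xs \<subseteq> {..<2 * n} then
        (\<Sum>i<length xs. ((-1::real) ^ i) *\<^sub>R D (xs ! i) (\<omega> (del i xs)))
      else 0)"

definition jinv :: "nat \<Rightarrow> (nat \<Rightarrow> nat \<Rightarrow> real) \<Rightarrow> nat \<Rightarrow> nat \<Rightarrow> real" where
  "jinv n J = (THE M. (\<forall>a<2 * n. \<forall>c<2 * n. (\<Sum>b<2 * n. J a b * M b c) = (if a = c then 1 else 0))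
                   \<and> (\<forall>a b. (2 * n \<le> a \<or> 2 * n \<le> b) \<longrightarrow> M a b = 0))"

definition trace_free :: "nat \<Rightarrow> (nat \<Rightarrow> nat \<Rightarrow> real) \<Rightarrow> nat \<Rightarrow> (nat list \<Rightarrow> 'v::real_vector) \<Rightarrow> bool" where
  "trace_free n J k \<omega> \<longleftrightarrow>
     (\<forall>cs. length cs + 2 = k \<longrightarrow>
        (\<Sum>a<2 * n. \<Sum>b<2 * n. jinv n J a b *\<^sub>R \<omega> (a # b # cs)) = 0)"

definition jwedge :: "nat \<Rightarrow> (nat \<Rightarrow> nat \<Rightarrow> real) \<Rightarrow> (nat list \<Rightarrow> 'v::real_vector) \<Rightarrow> nat list \<Rightarrow> 'v" where
  "jwedge n J \<beta> xs =
     (if set xs \<subseteq> {..<2 * n} then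
        (\<Sum>i<length xs. \<Sum>j<length xs. if i < j then
            ((-1::real) ^ (i + j + 1) * J (xs ! i) (xs ! j)) *\<^sub>R \<beta> (del i (del j xs))
          else 0)
      else 0)"

definition tf_part :: "nat \<Rightarrow> (nat \<Rightarrow> nat \<Rightarrow> real) \<Rightarrow> nat \<Rightarrow> (nat list \<Rightarrow> 'v::real_vector) \<Rightarrow> nat list \<Rightarrow> 'v" where
  "tf_part n J k \<omega> = (THE \<tau>. alt_form (2 * n) k \<tau> \<and> trace_free n J k \<tau> \<and>
        (\<exists>\<beta>. alt_form (2 * n) (k - 2) \<beta> \<and> (\<forall>xs. \<omega> xs = \<tau> xs + jwedge n J \<beta> xs)))"

definition rsp :: "nat \<Rightarrow> (nat \<Rightarrow> nat \<Rightarrow> real) \<Rightarrow> nat \<Rightarrow> (nat list \<Rightarrow> 'v::real_vector) set" where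
  "rsp n J r = {\<omega>. alt_form (2 * n) r \<omega> \<and> trace_free n J r \<omega>}"

definition rd :: "nat \<Rightarrow> (nat \<Rightarrow> nat \<Rightarrow> real) \<Rightarrow> (nat \<Rightarrow> 'v \<Rightarrow> 'v) \<Rightarrow> nat
    \<Rightarrow> (nat list \<Rightarrow> 'v::real_vector) \<Rightarrow> nat list \<Rightarrow> 'v" where
  "rd n J D r \<omega> = (if r = 0 then eth n D \<omega> else tf_part n J (Suc r) (eth n D \<omega>))"

definition cyc :: "(nat \<Rightarrow> ('b \<Rightarrow> 'v::zero) set) \<Rightarrow> (nat \<Rightarrow> ('b \<Rightarrow> 'v) \<Rightarrow> 'b \<Rightarrow> 'v) \<Rightarrow> nat \<Rightarrow> ('b \<Rightarrow> 'v) set" where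
  "cyc S d r = {\<omega> \<in> S r. \<forall>xs. d r \<omega> xs = 0}"

definition bdry :: "(nat \<Rightarrow> ('b \<Rightarrow> 'v::zero) set) \<Rightarrow> (nat \<Rightarrow> ('b \<Rightarrow> 'v) \<Rightarrow> 'b \<Rightarrow> 'v) \<Rightarrow> nat \<Rightarrow> ('b \<Rightarrow> 'v) set" where
  "bdry S d r = (if r = 0 then {\<lambda>_. 0} else d (r - 1) ` S (r - 1))"

definition quot_iso :: "('b \<Rightarrow> 'v::real_vector) set \<Rightarrow> ('b \<Rightarrow> 'v) set \<Rightarrow> ('b \<Rightarrow> 'v) set \<Rightarrow> ('b \<Rightarrow> 'v) set \<Rightarrow> bool" where
  "quot_iso Z1 B1 Z2 B2 \<longleftrightarrow> (\<exists>f.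
      (\<forall>x\<in>Z1. \<forall>y\<in>Z1. f (\<lambda>i. x i + y i) = (\<lambda>i. f x i + f y i)) \<and>
      (\<forall>c. \<forall>x\<in>Z1. f (\<lambda>i. c *\<^sub>R x i) = (\<lambda>i. c *\<^sub>R f x i)) \<and>
      f ` Z1 \<subseteq> Z2 \<and> f ` B1 \<subseteq> B2 \<and>
      (\<forall>z\<in>Z2. \<exists>x\<in>Z1. (\<lambda>i. z i - f x i) \<in> B2) \<and>
      (\<forall>x\<in>Z1. f x \<in> B2 \<longrightarrow> x \<in> B1))"

end

theory Submission
  imports Defs "Jordan_Normal_Form.Determinant"
begin

lemma sum_delta_mult: "b < (N::nat) \<Longrightarrow> (\<Sum>a<N. (if b = a then 1 else 0) * f a) = (f b :: real)"
proof -
  assume b: "b < N"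
  have "(\<Sum>a<N. (if b = a then 1 else 0) * f a) = (\<Sum>a<N. if b = a then f a else 0)"
    by (rule sum.cong) auto
  also have "\<dots> = f b" using b by simp
  finally show ?thesis .
qed

lemma sum_delta_mult2: "b < (N::nat) \<Longrightarrow> (\<Sum>a<N. f a * (if a = b then 1 else 0)) = (f b :: real)"
proof -
  assume b: "b < N"
  have "(\<Sum>a<N. f a * (if a = b then 1 else 0)) = (\<Sum>a<N. if b = a then f a else 0)"
    by (rule sum.cong) auto
  also have "\<dots> = f b" using b by simp
  finally show ?thesis .
qed

lemma jinv_unique_aux:
  fixes M M' :: "nat \<Rightarrow> nat \<Rightarrow> real" and N :: nat
  assumes MLi: "\<forall>a<N. \<forall>c<N. (\<Sum>b<N. M a b * J b c) = (if a = c then 1 else 0)"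
    and MR2: "\<forall>a<N. \<forall>c<N. (\<Sum>b<N. J a b * M' b c) = (if a = c then 1 else 0)"
    and Mo: "\<forall>a b. (N \<le> a \<or> N \<le> b) \<longrightarrow> M a b = 0"
    and Mo2: "\<forall>a b. (N \<le> a \<or> N \<le> b) \<longrightarrow> M' a b = 0"
  shows "M' = M"
proof (intro ext)
  fix b c
  show "M' b c = M b c"
  proof (cases "b < N \<and> c < N")
    case True
    have "M' b c = (\<Sum>a<N. (if b = a then 1 else 0) * M' a c)"
      using True sum_delta_mult[of b N "\<lambda>a. M' a c"] by simp
    also have "\<dots> = (\<Sum>a<N. (\<Sum>d<N. M b d * J d a) * M' a c)"
      using MLi True by simp
    also have "\<dots> = (\<Sum>d<N. M b d * (\<Sum>a<N. J d a * M' a c))"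
      by (simp add: sum_distrib_left sum_distrib_right mult.assoc, rule sum.swap)
    also have "\<dots> = (\<Sum>d<N. M b d * (if d = c then 1 else 0))"
      using MR2 True by simp
    also have "\<dots> = M b c" using True sum_delta_mult2[of c N "\<lambda>d. M b d"] by simp
    finally show ?thesis .
  next
    case False
    then have h: "N \<le> b \<or> N \<le> c" by auto
    show ?thesis using Mo[rule_format, OF h] Mo2[rule_format, OF h] by simp
  qed
qed

lemma jinv_props:
  fixes n :: nat and J :: "nat \<Rightarrow> nat \<Rightarrow> real"
  assumes J_skew: "\<forall>a<2 * n. \<forall>b<2 * n. J a b = - J b a"
    and J_nondeg: "\<forall>x :: nat \<Rightarrow> real. (\<forall>b<2 * n. (\<Sum>a<2 * n. x a * J a b) = 0) \<longrightarrow> (\<forall>a<2 * n. x a = 0)"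
  shows "(\<forall>a<2*n. \<forall>c<2*n. (\<Sum>b<2*n. J a b * jinv n J b c) = (if a = c then 1 else 0))
       \<and> (\<forall>a<2*n. \<forall>c<2*n. (\<Sum>b<2*n. jinv n J a b * J b c) = (if a = c then 1 else 0))
       \<and> (\<forall>a b. jinv n J a b = - jinv n J b a)
       \<and> (\<forall>a b. (2 * n \<le> a \<or> 2 * n \<le> b) \<longrightarrow> jinv n J a b = 0)"
proof -
  define N where "N = 2 * n"
  define A where "A = mat N N (\<lambda>(i,j). J i j)"
  have A: "A \<in> carrier_mat N N" unfolding A_def by simp
  have "det A \<noteq> 0"
  proof
    assume "det A = 0"
    then obtain v where v: "v \<in> carrier_vec N" "v \<noteq> 0\<^sub>v N" "A *\<^sub>v v = 0\<^sub>v N"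
      using det_0_iff_vec_prod_zero_field[OF A] by blast
    have "\<forall>b<N. (\<Sum>a<N. v $ a * J a b) = 0"
    proof (intro allI impI)
      fix b assume b: "b < N"
      have "0 = (A *\<^sub>v v) $ b" using v b by simp
      also have "\<dots> = (\<Sum>a<N. J b a * v $ a)"
        using b v(1) unfolding A_def by (simp add: scalar_prod_def atLeast0LessThan)
      also have "\<dots> = (\<Sum>a<N. - (v $ a * J a b))"
      proof (rule sum.cong)
        fix x assume "x \<in> {..<N}"
        then show "J b x * v $ x = - (v $ x * J x b)"
          using J_skew[rule_format, of b x] b unfolding N_def by simp
      qed simp
      also have "\<dots> = - (\<Sum>a<N. v $ a * J a b)" by (simp add: sum_negf)
      finally show "(\<Sum>a<N. v $ a * J a b) = 0" by simp
    qed
    then have "\<forall>a<N. v $ a = 0" using J_nondeg[rule_format, of "\<lambda>a. v $ a"] unfolding N_def by blast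
    then have "v = 0\<^sub>v N" using v(1) by (intro eq_vecI) auto
    with v show False by simp
  qed
  from det_non_zero_imp_unit[OF A this, of "()"]
  obtain B where B1: "B \<in> carrier_mat N N" "B * A = 1\<^sub>m N"
    unfolding Units_def ring_mat_def by auto
  have B: "B \<in> carrier_mat N N" "B * A = 1\<^sub>m N" "A * B = 1\<^sub>m N"
    using B1 mat_mult_left_right_inverse[OF B1(1) A B1(2)] by auto
  define M where "M a b = (if a < N \<and> b < N then B $$ (a,b) else 0)" for a b
  have MR: "\<forall>a<N. \<forall>c<N. (\<Sum>b<N. J a b * M b c) = (if a = c then 1 else 0)"
  proof (intro allI impI)
    fix a c assume ac: "a < N" "c < N"
    have "(A * B) $$ (a,c) = (\<Sum>b<N. J a b * M b c)"
      using ac B(1) unfolding A_def M_def by (simp add: scalar_prod_def atLeast0LessThan)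
    then show "(\<Sum>b<N. J a b * M b c) = (if a = c then 1 else 0)" using B ac by simp
  qed
  have MLi: "\<forall>a<N. \<forall>c<N. (\<Sum>b<N. M a b * J b c) = (if a = c then 1 else 0)"
  proof (intro allI impI)
    fix a c assume ac: "a < N" "c < N"
    have "(B * A) $$ (a,c) = (\<Sum>b<N. M a b * J b c)"
      using ac B(1) unfolding A_def M_def by (simp add: scalar_prod_def atLeast0LessThan)
    then show "(\<Sum>b<N. M a b * J b c) = (if a = c then 1 else 0)" using B ac by simp
  qed
  have Mo: "\<forall>a b. (N \<le> a \<or> N \<le> b) \<longrightarrow> M a b = 0" unfolding M_def by auto
  have jM: "jinv n J = M"
    unfolding jinv_def N_def[symmetric]
  proof (rule the_equality)
    show "(\<forall>a<N. \<forall>c<N. (\<Sum>b<N. J a b * M b c) = (if a = c then 1 else 0)) \<and> (\<forall>a b. N \<le> a \<or> N \<le> b \<longrightarrow> M a b = 0)"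
      using MR Mo by blast
    fix M' assume "(\<forall>a<N. \<forall>c<N. (\<Sum>b<N. J a b * M' b c) = (if a = c then 1 else 0)) \<and> (\<forall>a b. N \<le> a \<or> N \<le> b \<longrightarrow> M' a b = 0)"
    then show "M' = M" using jinv_unique_aux[OF MLi _ Mo] by blast
  qed
  have skew: "(\<lambda>a b. - M b a) = M"
  proof (rule jinv_unique_aux[OF MLi _ Mo])
    show "\<forall>a<N. \<forall>c<N. (\<Sum>b<N. J a b * - M c b) = (if a = c then 1 else 0)"
    proof (intro allI impI)
      fix a c assume ac: "a < N" "c < N"
      have "(\<Sum>b<N. J a b * - M c b) = (\<Sum>b<N. M c b * J b a)"
      proof (rule sum.cong)
        fix x assume "x \<in> {..<N}"
        then show "J a x * - M c x = M c x * J x a"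
          using J_skew[rule_format, of a x] ac unfolding N_def by simp
      qed simp
      then show "(\<Sum>b<N. J a b * - M c b) = (if a = c then 1 else 0)" using MLi ac by auto
    qed
    show "\<forall>a b. N \<le> a \<or> N \<le> b \<longrightarrow> - M b a = 0" using Mo by auto
  qed
  have "\<forall>a b. M a b = - M b a"
  proof (intro allI)
    fix a b show "M a b = - M b a" using fun_cong[OF fun_cong[OF skew, of b], of a] by simp
  qed
  then show ?thesis using MR MLi Mo unfolding jM N_def by blast
qed

definition f0 :: "'v::real_vector \<Rightarrow> nat list \<Rightarrow> 'v" where
  "f0 v xs = (if xs = [] then v else 0)"
definition f1 :: "nat \<Rightarrow> (nat \<Rightarrow> 'v::real_vector) \<Rightarrow> nat list \<Rightarrow> 'v" where
  "f1 N g xs = (case xs of [a] \<Rightarrow> (if a < N then g a else 0) | _ \<Rightarrow> 0)"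
definition f2 :: "nat \<Rightarrow> (nat \<Rightarrow> nat \<Rightarrow> 'v::real_vector) \<Rightarrow> nat list \<Rightarrow> 'v" where
  "f2 N g xs = (case xs of [a, b] \<Rightarrow> (if a < N \<and> b < N then g a b else 0) | _ \<Rightarrow> 0)"
definition f3 :: "nat \<Rightarrow> (nat \<Rightarrow> nat \<Rightarrow> nat \<Rightarrow> 'v::real_vector) \<Rightarrow> nat list \<Rightarrow> 'v" where
  "f3 N g xs = (case xs of [a, b, c] \<Rightarrow> (if a < N \<and> b < N \<and> c < N then g a b c else 0) | _ \<Rightarrow> 0)"

lemma f0_simps[simp]: "f0 v [] = v" "f0 v (x # xs) = 0"
  by (simp_all add: f0_def)
lemma f1_simps[simp]: "f1 N g [a] = (if a < N then g a else 0)"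
  by (simp add: f1_def)
lemma f2_simps[simp]: "f2 N g [a, b] = (if a < N \<and> b < N then g a b else 0)"
  by (simp add: f2_def)
lemma f3_simps[simp]: "f3 N g [a, b, c] = (if a < N \<and> b < N \<and> c < N then g a b c else 0)"
  by (simp add: f3_def)

lemma len1_cases: "length xs = 1 \<Longrightarrow> \<exists>a. xs = [a]"
  by (cases xs) auto
lemma len2_cases: "length xs = 2 \<Longrightarrow> \<exists>a b. xs = [a, b]"
  by (auto simp: length_Suc_conv numeral_2_eq_2)
lemma len3_cases: "length xs = 3 \<Longrightarrow> \<exists>a b c. xs = [a, b, c]"
  by (auto simp: length_Suc_conv numeral_3_eq_3)

lemma f1_len: "length xs \<noteq> 1 \<Longrightarrow> f1 N g xs = 0"
  by (auto simp: f1_def split: list.split)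
lemma f2_len: "length xs \<noteq> 2 \<Longrightarrow> f2 N g xs = 0"
  by (auto simp: f2_def split: list.split)
lemma f3_len: "length xs \<noteq> 3 \<Longrightarrow> f3 N g xs = 0"
  by (auto simp: f3_def split: list.split)
lemma f0_len: "length xs \<noteq> 0 \<Longrightarrow> f0 v xs = 0"
  by (auto simp: f0_def)

lemma f1_rng: "\<not> set xs \<subseteq> {..<N} \<Longrightarrow> f1 N g xs = 0"
  by (auto simp: f1_def split: list.split)
lemma f2_rng: "\<not> set xs \<subseteq> {..<N} \<Longrightarrow> f2 N g xs = 0"
  by (auto simp: f2_def split: list.split)
lemma f3_rng: "\<not> set xs \<subseteq> {..<N} \<Longrightarrow> f3 N g xs = 0"
  by (auto simp: f3_def split: list.split)

lemma f0_ext: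
  assumes "\<And>xs. length xs \<noteq> 0 \<Longrightarrow> F xs = 0" "F [] = v"
  shows "F = f0 v"
proof (rule ext)
  fix xs show "F xs = f0 v xs" using assms by (cases xs) auto
qed

lemma f1_ext:
  assumes "\<And>a. a < N \<Longrightarrow> F [a] = G a" "\<And>xs. length xs \<noteq> 1 \<Longrightarrow> F xs = 0"
    "\<And>xs. \<not> set xs \<subseteq> {..<N} \<Longrightarrow> F xs = 0"
  shows "F = f1 N G"
proof (rule ext)
  fix xs show "F xs = f1 N G xs"
  proof (cases "length xs = 1")
    case True
    then obtain a where xs: "xs = [a]" using len1_cases by blast
    show ?thesis
    proof (cases "a < N")
      case True then show ?thesis using assms(1) xs by simp
    next
      case False then show ?thesis using assms(3)[of xs] xs by simp
    qed
  next
    case False then show ?thesis using assms(2) f1_len by metis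
  qed
qed

lemma f2_ext:
  assumes "\<And>a b. a < N \<Longrightarrow> b < N \<Longrightarrow> F [a, b] = G a b" "\<And>xs. length xs \<noteq> 2 \<Longrightarrow> F xs = 0"
    "\<And>xs. \<not> set xs \<subseteq> {..<N} \<Longrightarrow> F xs = 0"
  shows "F = f2 N G"
proof (rule ext)
  fix xs show "F xs = f2 N G xs"
  proof (cases "length xs = 2")
    case True
    then obtain a b where xs: "xs = [a, b]" using len2_cases by blast
    show ?thesis
    proof (cases "a < N \<and> b < N")
      case True then show ?thesis using assms(1) xs by simp
    next
      case False then show ?thesis using assms(3)[of xs] xs by auto
    qed
  next
    case False then show ?thesis using assms(2) f2_len by metis
  qed
qed

lemma f3_ext:
  assumes "\<And>a b c. a < N \<Longrightarrow> b < N \<Longrightarrow> c < N \<Longrightarrow> F [a, b, c] = G a b c"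
    "\<And>xs. length xs \<noteq> 3 \<Longrightarrow> F xs = 0"
    "\<And>xs. \<not> set xs \<subseteq> {..<N} \<Longrightarrow> F xs = 0"
  shows "F = f3 N G"
proof (rule ext)
  fix xs show "F xs = f3 N G xs"
  proof (cases "length xs = 3")
    case True
    then obtain a b c where xs: "xs = [a, b, c]" using len3_cases by blast
    show ?thesis
    proof (cases "a < N \<and> b < N \<and> c < N")
      case True then show ?thesis using assms(1) xs by simp
    next
      case False then show ?thesis using assms(3)[of xs] xs by auto
    qed
  next
    case False then show ?thesis using assms(2) f3_len by metis
  qed
qed

lemma alt_len: "alt_form N k \<omega> \<Longrightarrow> length xs \<noteq> k \<Longrightarrow> \<omega> xs = 0"
  by (simp add: alt_form_def)
lemma alt_rng: "alt_form N k \<omega> \<Longrightarrow> \<not> set xs \<subseteq> {..<N} \<Longrightarrow> \<omega> xs = 0"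
  by (simp add: alt_form_def)
lemma alt_swap: "alt_form N k \<omega> \<Longrightarrow> i < length xs \<Longrightarrow> j < length xs \<Longrightarrow> i \<noteq> j
   \<Longrightarrow> \<omega> (xs[i := xs ! j, j := xs ! i]) = - \<omega> xs"
  by (simp add: alt_form_def)

lemma alt2_anti: "alt_form N 2 \<omega> \<Longrightarrow> \<omega> [a, b] = - \<omega> [b, a]"
  using alt_swap[of N 2 \<omega> 0 "[b, a]" 1] by simp
lemma alt3_anti:
  assumes "alt_form N 3 \<omega>"
  shows "\<omega> [a, b, c] = - \<omega> [b, a, c]" "\<omega> [a, b, c] = - \<omega> [a, c, b]" "\<omega> [a, b, c] = - \<omega> [c, b, a]"
  using alt_swap[OF assms, of 0 "[b, a, c]" 1] alt_swap[OF assms, of 1 "[a, c, b]" 2]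
    alt_swap[OF assms, of 0 "[c, b, a]" 2] by simp_all

lemma alt_eq0: "alt_form N 0 \<omega> \<Longrightarrow> \<omega> = f0 (\<omega> [])"
  by (rule f0_ext) (auto simp: alt_len)
lemma alt_eq1: "alt_form N 1 \<omega> \<Longrightarrow> \<omega> = f1 N (\<lambda>a. \<omega> [a])"
  by (rule f1_ext) (auto simp: alt_len alt_rng)
lemma alt_eq2: "alt_form N 2 \<omega> \<Longrightarrow> \<omega> = f2 N (\<lambda>a b. \<omega> [a, b])"
  by (rule f2_ext) (auto simp: alt_len alt_rng)
lemma alt_eq3: "alt_form N 3 \<omega> \<Longrightarrow> \<omega> = f3 N (\<lambda>a b c. \<omega> [a, b, c])"
  by (rule f3_ext) (auto simp: alt_len alt_rng)

lemma alt_f0: "alt_form N 0 (f0 v)"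
  unfolding alt_form_def by (auto simp: f0_def)

lemma alt_f1: "alt_form N 1 (f1 N g)"
  unfolding alt_form_def
proof (intro conjI allI impI)
  fix xs :: "nat list"
  assume "length xs \<noteq> 1 \<or> \<not> set xs \<subseteq> {..<N}"
  then show "f1 N g xs = 0" using f1_len f1_rng by metis
next
  fix xs :: "nat list" assume "\<not> distinct xs"
  then have "length xs \<noteq> 1" by (cases xs) auto
  then show "f1 N g xs = 0" by (rule f1_len)
next
  fix xs :: "nat list" and i j assume "i < length xs" "j < length xs" "i \<noteq> j"
  then have "length xs \<noteq> 1" by auto
  then show "f1 N g (xs[i := xs ! j, j := xs ! i]) = - f1 N g xs" by (simp add: f1_len)
qed

lemma neg_self_zero: "(x::'v::real_vector) = - x \<Longrightarrow> x = 0"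
proof -
  assume h: "x = - x"
  have "x + x = 0" using h by (metis add.right_inverse)
  then have "(2::real) *\<^sub>R x = 0" by (simp add: scaleR_2)
  then show "x = 0" by simp
qed

lemma alt_f2:
  assumes anti: "\<And>a b. a < N \<Longrightarrow> b < N \<Longrightarrow> g a b = - g b a"
  shows "alt_form N 2 (f2 N g)"
  unfolding alt_form_def
proof (intro conjI allI impI)
  fix xs :: "nat list"
  assume "length xs \<noteq> 2 \<or> \<not> set xs \<subseteq> {..<N}"
  then show "f2 N g xs = 0" using f2_len f2_rng by metis
next
  fix xs :: "nat list" assume nd: "\<not> distinct xs"
  show "f2 N g xs = 0"
  proof (cases "length xs = 2")
    case True
    then obtain a b where xs: "xs = [a, b]" using len2_cases by blast
    with nd have "a = b" by auto
    then show ?thesis using xs anti[of a a] neg_self_zero by auto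
  qed (rule f2_len)
next
  fix xs :: "nat list" and i j assume ij: "i < length xs" "j < length xs" "i \<noteq> j"
  show "f2 N g (xs[i := xs ! j, j := xs ! i]) = - f2 N g xs"
  proof (cases "length xs = 2")
    case True
    then obtain a b where xs: "xs = [a, b]" using len2_cases by blast
    from ij True have "(i = 0 \<and> j = 1) \<or> (i = 1 \<and> j = 0)" by auto
    then show ?thesis using xs anti[of a b] by auto
  next
    case False then show ?thesis by (simp add: f2_len)
  qed
qed

lemma alt_f3:
  assumes anti1: "\<And>a b c. a < N \<Longrightarrow> b < N \<Longrightarrow> c < N \<Longrightarrow> g a b c = - g b a c"
    and anti2: "\<And>a b c. a < N \<Longrightarrow> b < N \<Longrightarrow> c < N \<Longrightarrow> g a b c = - g a c b"
    and anti3: "\<And>a b c. a < N \<Longrightarrow> b < N \<Longrightarrow> c < N \<Longrightarrow> g a b c = - g c b a"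
  shows "alt_form N 3 (f3 N g)"
  unfolding alt_form_def
proof (intro conjI allI impI)
  fix xs :: "nat list"
  assume "length xs \<noteq> 3 \<or> \<not> set xs \<subseteq> {..<N}"
  then show "f3 N g xs = 0" using f3_len f3_rng by metis
next
  fix xs :: "nat list" assume nd: "\<not> distinct xs"
  show "f3 N g xs = 0"
  proof (cases "length xs = 3")
    case True
    then obtain a b c where xs: "xs = [a, b, c]" using len3_cases by blast
    with nd have "a = b \<or> a = c \<or> b = c" by auto
    then show ?thesis using xs anti1[of a a c] anti2[of a b b] anti3[of a b a] neg_self_zero by auto
  qed (rule f3_len)
next
  fix xs :: "nat list" and i j assume ij: "i < length xs" "j < length xs" "i \<noteq> j"
  show "f3 N g (xs[i := xs ! j, j := xs ! i]) = - f3 N g xs"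
  proof (cases "length xs = 3")
    case True
    then obtain a b c where xs: "xs = [a, b, c]" using len3_cases by blast
    from ij True have "(i = 0 \<and> j = 1) \<or> (i = 1 \<and> j = 0) \<or> (i = 0 \<and> j = 2) \<or> (i = 2 \<and> j = 0)
        \<or> (i = 1 \<and> j = 2) \<or> (i = 2 \<and> j = 1)" by auto
    then show ?thesis using xs anti1[of a b c] anti2[of a b c] anti3[of a b c] by auto
  next
    case False then show ?thesis by (simp add: f3_len)
  qed
qed

lemma alt_add: "alt_form N k \<omega> \<Longrightarrow> alt_form N k \<eta> \<Longrightarrow> alt_form N k (\<lambda>xs. \<omega> xs + \<eta> xs)"
  unfolding alt_form_def by auto
lemma alt_diff: "alt_form N k \<omega> \<Longrightarrow> alt_form N k \<eta> \<Longrightarrow> alt_form N k (\<lambda>xs. \<omega> xs - \<eta> xs)"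
  unfolding alt_form_def by auto
lemma alt_scale: "alt_form N k \<omega> \<Longrightarrow> alt_form N k (\<lambda>xs. c *\<^sub>R \<omega> xs)"
  unfolding alt_form_def by auto
lemma alt_zero: "alt_form N k (\<lambda>xs. 0)"
  unfolding alt_form_def by auto

lemma length_del: "i < length xs \<Longrightarrow> length (del i xs) = length xs - 1"
  by (simp add: del_def)

lemma eth_1: "a < 2 * n \<Longrightarrow> eth n D \<omega> [a] = D a (\<omega> [])"
  by (simp add: eth_def del_def)
lemma eth_2: "a < 2 * n \<Longrightarrow> b < 2 * n \<Longrightarrow> eth n D \<omega> [a, b] = D a (\<omega> [b]) - D b (\<omega> [a])"
  by (simp add: eth_def del_def numeral_2_eq_2 lessThan_Suc)
lemma eth_3: "a < 2 * n \<Longrightarrow> b < 2 * n \<Longrightarrow> c < 2 * n \<Longrightarrow>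
    eth n D \<omega> [a, b, c] = D a (\<omega> [b, c]) - D b (\<omega> [a, c]) + D c (\<omega> [a, b])"
  by (simp add: eth_def del_def numeral_3_eq_3 lessThan_Suc)
lemma jw_2: "a < 2 * n \<Longrightarrow> b < 2 * n \<Longrightarrow> jwedge n J \<beta> [a, b] = J a b *\<^sub>R \<beta> []"
  by (simp add: jwedge_def del_def numeral_2_eq_2 lessThan_Suc)
lemma jw_3: "a < 2 * n \<Longrightarrow> b < 2 * n \<Longrightarrow> c < 2 * n \<Longrightarrow>
    jwedge n J \<beta> [a, b, c] = J a b *\<^sub>R \<beta> [c] - J a c *\<^sub>R \<beta> [b] + J b c *\<^sub>R \<beta> [a]"
  by (simp add: jwedge_def del_def numeral_3_eq_3 lessThan_Suc)
lemma ce_1: "x \<le> 2 * n \<Longrightarrow> ce_d n J D T \<omega> [x] = rho n D T x (\<omega> [])"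
  by (simp add: ce_d_def del_def)
lemma ce_2: "x \<le> 2 * n \<Longrightarrow> y \<le> 2 * n \<Longrightarrow>
    ce_d n J D T \<omega> [x, y] = rho n D T x (\<omega> [y]) - rho n D T y (\<omega> [x]) - Jh n J x y *\<^sub>R \<omega> [2 * n]"
  by (simp add: ce_d_def del_def numeral_2_eq_2 lessThan_Suc)
lemma ce_3: "x \<le> 2 * n \<Longrightarrow> y \<le> 2 * n \<Longrightarrow> z \<le> 2 * n \<Longrightarrow>
    ce_d n J D T \<omega> [x, y, z] = rho n D T x (\<omega> [y, z]) - rho n D T y (\<omega> [x, z]) + rho n D T z (\<omega> [x, y])
      - Jh n J x y *\<^sub>R \<omega> [2 * n, z] + Jh n J x z *\<^sub>R \<omega> [2 * n, y] - Jh n J y z *\<^sub>R \<omega> [2 * n, x]"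
  by (simp add: ce_d_def del_def numeral_3_eq_3 lessThan_Suc)

lemma rho_lt[simp]: "a < 2 * n \<Longrightarrow> rho n D T a = D a" by (simp add: rho_def)
lemma rho_top[simp]: "rho n D T (2 * n) = T" by (simp add: rho_def)
lemma Jh_lt[simp]: "a < 2 * n \<Longrightarrow> b < 2 * n \<Longrightarrow> Jh n J a b = J a b" by (simp add: Jh_def)
lemma Jh_top1[simp]: "Jh n J (2 * n) b = 0" by (simp add: Jh_def)
lemma Jh_top2[simp]: "Jh n J a (2 * n) = 0" by (simp add: Jh_def)

lemma eth_out: "\<not> set xs \<subseteq> {..<2 * n} \<Longrightarrow> eth n D \<omega> xs = 0"
  by (simp add: eth_def)
lemma jw_out: "\<not> set xs \<subseteq> {..<2 * n} \<Longrightarrow> jwedge n J \<beta> xs = 0"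
  by (simp add: jwedge_def)
lemma ce_out: "\<not> set xs \<subseteq> {..<Suc (2 * n)} \<Longrightarrow> ce_d n J D T \<omega> xs = 0"
  by (simp add: ce_d_def lessThan_Suc_atMost)

lemma eth_len:
  assumes lin: "\<forall>a<2 * n. linear (D a)" and z: "\<And>ys. length ys \<noteq> k \<Longrightarrow> \<omega> ys = 0"
    and len: "length xs \<noteq> Suc k"
  shows "eth n D \<omega> xs = 0"
proof (cases "set xs \<subseteq> {..<2 * n}")
  case True
  have "\<forall>i\<in>{..<length xs}. ((-1::real) ^ i) *\<^sub>R D (xs ! i) (\<omega> (del i xs)) = 0"
  proof
    fix i assume i: "i \<in> {..<length xs}"
    then have "xs ! i < 2 * n" using True nth_mem by fastforce
    then have l: "linear (D (xs ! i))" using lin by blast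
    have "\<omega> (del i xs) = 0" using z len i by (simp add: length_del)
    then show "((-1::real) ^ i) *\<^sub>R D (xs ! i) (\<omega> (del i xs)) = 0" using linear_0[OF l] by simp
  qed
  then show ?thesis using True by (simp add: eth_def)
qed (simp add: eth_def)

lemma jw_len:
  assumes z: "\<And>ys. length ys \<noteq> k \<Longrightarrow> \<beta> ys = 0"
    and len: "length xs \<noteq> k + 2"
  shows "jwedge n J \<beta> xs = 0"
proof -
  have H: "\<And>i j. i < length xs \<Longrightarrow> j < length xs \<Longrightarrow> i < j \<Longrightarrow> \<beta> (del i (del j xs)) = 0"
    using z len by (simp add: length_del)
  show ?thesis unfolding jwedge_def by (auto intro!: sum.neutral simp: H)
qed

lemma ce_len:
  assumes lin: "\<forall>a<2 * n. linear (D a)" and linT: "linear T"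
    and z: "\<And>ys. length ys \<noteq> k \<Longrightarrow> \<omega> ys = 0"
    and len: "length xs \<noteq> Suc k"
  shows "ce_d n J D T \<omega> xs = 0"
proof (cases "set xs \<subseteq> {..2 * n}")
  case True
  have "\<forall>i\<in>{..<length xs}. ((-1::real) ^ i) *\<^sub>R rho n D T (xs ! i) (\<omega> (del i xs)) = 0"
  proof
    fix i assume i: "i \<in> {..<length xs}"
    then have "xs ! i \<le> 2 * n" using True nth_mem by fastforce
    then have l: "linear (rho n D T (xs ! i))" using lin linT by (auto simp: rho_def)
    have "\<omega> (del i xs) = 0" using z len i by (simp add: length_del)
    then show "((-1::real) ^ i) *\<^sub>R rho n D T (xs ! i) (\<omega> (del i xs)) = 0" using linear_0[OF l] by simp
  qed
  moreover have H: "\<And>i j. i < length xs \<Longrightarrow> j < length xs \<Longrightarrow> i < j \<Longrightarrow> \<omega> (2 * n # del i (del j xs)) = 0"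
    using z len by (simp add: length_del)
  then have "(\<Sum>i<length xs. \<Sum>j<length xs. if i < j then
            ((-1::real) ^ (i + j) * Jh n J (xs ! i) (xs ! j)) *\<^sub>R \<omega> (2 * n # del i (del j xs))
          else 0) = 0" by (auto intro!: sum.neutral simp: H)
  ultimately show ?thesis using True by (simp add: ce_d_def)
qed (simp add: ce_d_def)

locale heis =
  fixes n :: nat and J :: "nat \<Rightarrow> nat \<Rightarrow> real"
    and D :: "nat \<Rightarrow> 'v::real_vector \<Rightarrow> 'v" and T :: "'v \<Rightarrow> 'v"
  assumes n3: "n \<ge> 3"
    and J_skew: "\<forall>a<2 * n. \<forall>b<2 * n. J a b = - J b a"
    and J_nondeg: "\<forall>x :: nat \<Rightarrow> real. (\<forall>b<2 * n. (\<Sum>a<2 * n. x a * J a b) = 0) \<longrightarrow> (\<forall>a<2 * n. x a = 0)"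
    and D_lin: "\<forall>a<2 * n. linear (D a)"
    and T_lin: "linear T"
    and rep_bracket: "\<forall>a<2 * n. \<forall>b<2 * n. \<forall>v. D a (D b v) - D b (D a v) = J a b *\<^sub>R T v"
    and rep_centre: "\<forall>a<2 * n. \<forall>v. D a (T v) = T (D a v)"
begin

abbreviation "N \<equiv> 2 * n"
abbreviation "M \<equiv> jinv n J"

lemma JM: "a < N \<Longrightarrow> c < N \<Longrightarrow> (\<Sum>b<N. J a b * M b c) = (if a = c then 1 else 0)"
  using jinv_props[OF J_skew J_nondeg] by blast
lemma MJ: "a < N \<Longrightarrow> c < N \<Longrightarrow> (\<Sum>b<N. M a b * J b c) = (if a = c then 1 else 0)"
  using jinv_props[OF J_skew J_nondeg] by blast
lemma M_skew: "M a b = - M b a"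
  using jinv_props[OF J_skew J_nondeg] by blast
lemma Jsk: "a < N \<Longrightarrow> b < N \<Longrightarrow> J a b = - J b a"
  using J_skew by blast
lemma Jaa: "a < N \<Longrightarrow> J a a = 0"
  using Jsk[of a a] by simp

lemma Dlin: "a < N \<Longrightarrow> linear (D a)" using D_lin by blast
lemma D_add: "a < N \<Longrightarrow> D a (x + y) = D a x + D a y" using linear_add[OF Dlin] by blast
lemma D_diff: "a < N \<Longrightarrow> D a (x - y) = D a x - D a y" using linear_diff[OF Dlin] by blast
lemma D_scale: "a < N \<Longrightarrow> D a (c *\<^sub>R x) = c *\<^sub>R D a x" using linear_scale[OF Dlin] by blast
lemma D_neg: "a < N \<Longrightarrow> D a (- x) = - D a x" using linear_neg[OF Dlin] by blast
lemma D_zero: "a < N \<Longrightarrow> D a 0 = 0" using linear_0[OF Dlin] by blast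
lemma T_add: "T (x + y) = T x + T y" using linear_add[OF T_lin] by blast
lemma T_diff: "T (x - y) = T x - T y" using linear_diff[OF T_lin] by blast
lemma T_scale: "T (c *\<^sub>R x) = c *\<^sub>R T x" using linear_scale[OF T_lin] by blast
lemma T_neg: "T (- x) = - T x" using linear_neg[OF T_lin] by blast
lemma T_zero: "T 0 = 0" using linear_0[OF T_lin] by blast
lemma brk: "a < N \<Longrightarrow> b < N \<Longrightarrow> D a (D b v) = D b (D a v) + J a b *\<^sub>R T v"
  using rep_bracket by (metis add.commute diff_add_cancel)

lemma N_pos: "real N \<ge> 6" using n3 by simp

lemma sum_delta_v: "c < (N'::nat) \<Longrightarrow> (\<Sum>a<N'. (if a = c then 1 else 0) *\<^sub>R (g a :: 'w::real_vector)) = g c"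
proof -
  assume c: "c < N'"
  have "(\<Sum>a<N'. (if a = c then 1 else 0) *\<^sub>R g a) = (\<Sum>a<N'. if c = a then g a else 0)"
    by (rule sum.cong) auto
  also have "\<dots> = g c" using c by simp
  finally show ?thesis .
qed

lemma K1: "(\<Sum>a<N. \<Sum>b<N. M a b *\<^sub>R (J a b *\<^sub>R (x::'v))) = (- real N) *\<^sub>R x"
proof -
  have "(\<Sum>a<N. \<Sum>b<N. M a b *\<^sub>R (J a b *\<^sub>R x)) = (\<Sum>a<N. (\<Sum>b<N. M a b * J a b)) *\<^sub>R x"
    by (simp add: scaleR_sum_left)
  also have "(\<Sum>a<N. (\<Sum>b<N. M a b * J a b)) = (\<Sum>a<N. - (1::real))"
  proof (rule sum.cong)
    fix a assume a: "a \<in> {..<N}"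
    have "(\<Sum>b<N. M a b * J a b) = (\<Sum>b<N. - (M a b * J b a))"
    proof (rule sum.cong)
      fix b assume "b \<in> {..<N}" then show "M a b * J a b = - (M a b * J b a)" using a Jsk[of a b] by simp
    qed simp
    also have "\<dots> = - 1" using MJ[of a a] a by (simp add: sum_negf)
    finally show "(\<Sum>b<N. M a b * J a b) = - 1" .
  qed simp
  finally show ?thesis by simp
qed

lemma K2: "c < N \<Longrightarrow> (\<Sum>a<N. \<Sum>b<N. M a b *\<^sub>R (J a c *\<^sub>R (g b::'v))) = - g c"
proof -
  assume c: "c < N"
  have "(\<Sum>a<N. \<Sum>b<N. M a b *\<^sub>R (J a c *\<^sub>R g b)) = (\<Sum>b<N. \<Sum>a<N. (M a b * J a c) *\<^sub>R g b)"
    by (simp, rule sum.swap)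
  also have "\<dots> = (\<Sum>b<N. (\<Sum>a<N. M a b * J a c) *\<^sub>R g b)"
    by (simp add: scaleR_sum_left)
  also have "\<dots> = (\<Sum>b<N. - ((if b = c then 1 else 0) *\<^sub>R g b))"
  proof (rule sum.cong)
    fix b assume b: "b \<in> {..<N}"
    have "(\<Sum>a<N. M a b * J a c) = (\<Sum>a<N. - (M b a * J a c))"
      by (rule sum.cong) (auto simp: M_skew[of _ b])
    also have "\<dots> = - (if b = c then 1 else 0)" using MJ[of b c] b c by (simp add: sum_negf)
    finally show "(\<Sum>a<N. M a b * J a c) *\<^sub>R g b = - ((if b = c then 1 else 0) *\<^sub>R g b)" by simp
  qed simp
  also have "\<dots> = - g c" using sum_delta_v[OF c, of g] by (simp add: sum_negf)
  finally show ?thesis .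
qed

lemma K3: "c < N \<Longrightarrow> (\<Sum>a<N. \<Sum>b<N. M a b *\<^sub>R (J b c *\<^sub>R (g a::'v))) = g c"
proof -
  assume c: "c < N"
  have "(\<Sum>a<N. \<Sum>b<N. M a b *\<^sub>R (J b c *\<^sub>R g a)) = (\<Sum>a<N. (\<Sum>b<N. M a b * J b c) *\<^sub>R g a)"
    by (simp add: scaleR_sum_left)
  also have "\<dots> = (\<Sum>a<N. (if a = c then 1 else 0) *\<^sub>R g a)"
    by (rule sum.cong) (auto simp: MJ c)
  also have "\<dots> = g c" using sum_delta_v[OF c, of g] by simp
  finally show ?thesis .
qed


lemma f1_cong: "(\<And>a. a < N' \<Longrightarrow> g a = g' a) \<Longrightarrow> f1 N' g = f1 N' g'"
  by (auto simp: f1_def fun_eq_iff split: list.split)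
lemma f2_cong: "(\<And>a b. a < N' \<Longrightarrow> b < N' \<Longrightarrow> g a b = g' a b) \<Longrightarrow> f2 N' g = f2 N' g'"
  by (auto simp: f2_def fun_eq_iff split: list.split)
lemma f3_cong: "(\<And>a b c. a < N' \<Longrightarrow> b < N' \<Longrightarrow> c < N' \<Longrightarrow> g a b c = g' a b c) \<Longrightarrow> f3 N' g = f3 N' g'"
  by (auto simp: f3_def fun_eq_iff split: list.split)

lemma jw_f0: "jwedge n J (f0 s) = f2 N (\<lambda>a b. J a b *\<^sub>R s)"
proof (rule f2_ext)
  fix xs :: "nat list" assume "length xs \<noteq> 2"
  then show "jwedge n J (f0 s) xs = 0" by (intro jw_len[where k=0]) (auto simp: f0_len)
qed (auto simp: jw_2 jw_out)

lemma jw_f1: "jwedge n J (f1 N g) = f3 N (\<lambda>a b c. J a b *\<^sub>R g c - J a c *\<^sub>R g b + J b c *\<^sub>R g a)"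
proof (rule f3_ext)
  fix xs :: "nat list" assume "length xs \<noteq> 3"
  then show "jwedge n J (f1 N g) xs = 0" by (intro jw_len[where k=1]) (auto simp: f1_len)
qed (auto simp: jw_3 jw_out)

lemma eth_f0: "eth n D (f0 v) = f1 N (\<lambda>a. D a v)"
proof (rule f1_ext)
  fix xs :: "nat list" assume "length xs \<noteq> 1"
  then show "eth n D (f0 v) xs = 0" by (intro eth_len[where k=0, OF D_lin]) (auto simp: f0_len)
qed (auto simp: eth_1 eth_out)

lemma eth_f1: "eth n D (f1 N g) = f2 N (\<lambda>a b. D a (g b) - D b (g a))"
proof (rule f2_ext)
  fix xs :: "nat list" assume "length xs \<noteq> 2"
  then show "eth n D (f1 N g) xs = 0" by (intro eth_len[where k=1, OF D_lin]) (auto simp: f1_len)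
qed (auto simp: eth_2 eth_out)

lemma eth_f2: "eth n D (f2 N g) = f3 N (\<lambda>a b c. D a (g b c) - D b (g a c) + D c (g a b))"
proof (rule f3_ext)
  fix xs :: "nat list" assume "length xs \<noteq> 3"
  then show "eth n D (f2 N g) xs = 0" by (intro eth_len[where k=2, OF D_lin]) (auto simp: f2_len)
qed (auto simp: eth_3 eth_out)

lemma tf2_iff: "trace_free n J 2 \<tau> \<longleftrightarrow> (\<Sum>a<N. \<Sum>b<N. M a b *\<^sub>R \<tau> [a, b]) = 0"
  unfolding trace_free_def by auto

lemma tf3_iff: "trace_free n J 3 \<tau> \<longleftrightarrow> (\<forall>c. (\<Sum>a<N. \<Sum>b<N. M a b *\<^sub>R \<tau> [a, b, c]) = 0)"
  unfolding trace_free_def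
proof (intro iffI allI impI)
  fix cs :: "nat list" assume H: "\<forall>c. (\<Sum>a<N. \<Sum>b<N. M a b *\<^sub>R \<tau> [a, b, c]) = 0" and "length cs + 2 = 3"
  then obtain c where "cs = [c]" using len1_cases by fastforce
  then show "(\<Sum>a<N. \<Sum>b<N. M a b *\<^sub>R \<tau> (a # b # cs)) = 0" using H by simp
next
  fix c assume H: "\<forall>cs. length cs + 2 = 3 \<longrightarrow> (\<Sum>a<N. \<Sum>b<N. M a b *\<^sub>R \<tau> (a # b # cs)) = 0"
  show "(\<Sum>a<N. \<Sum>b<N. M a b *\<^sub>R \<tau> [a, b, c]) = 0" using H[rule_format, of "[c]"] by simp
qed

lemma uniq2:
  fixes \<tau>1 \<tau>2 \<beta>1 \<beta>2 :: "nat list \<Rightarrow> 'v"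
  assumes "alt_form N 2 \<tau>1" "trace_free n J 2 \<tau>1" "alt_form N 0 \<beta>1"
    "alt_form N 2 \<tau>2" "trace_free n J 2 \<tau>2" "alt_form N 0 \<beta>2"
    and eq: "\<And>xs. \<tau>1 xs + jwedge n J \<beta>1 xs = \<tau>2 xs + jwedge n J \<beta>2 xs"
  shows "\<tau>1 = \<tau>2"
proof -
  define s1 where "s1 = \<beta>1 []"
  define s2 where "s2 = \<beta>2 []"
  have b1: "\<beta>1 = f0 s1" using alt_eq0[OF assms(3)] s1_def by simp
  have b2: "\<beta>2 = f0 s2" using alt_eq0[OF assms(6)] s2_def by simp
  have e: "\<tau>1 [a, b] - \<tau>2 [a, b] = J a b *\<^sub>R (s2 - s1)" if "a < N" "b < N" for a b
    using eq[of "[a, b]"] that unfolding b1 b2 by (simp add: jw_2 scaleR_diff_right algebra_simps)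
  have "0 = (\<Sum>a<N. \<Sum>b<N. M a b *\<^sub>R \<tau>1 [a, b]) - (\<Sum>a<N. \<Sum>b<N. M a b *\<^sub>R \<tau>2 [a, b])"
    using assms(2,5) by (simp add: tf2_iff)
  also have "\<dots> = (\<Sum>a<N. \<Sum>b<N. M a b *\<^sub>R (\<tau>1 [a, b] - \<tau>2 [a, b]))"
    by (simp add: scaleR_diff_right sum_subtractf)
  also have "\<dots> = (\<Sum>a<N. \<Sum>b<N. M a b *\<^sub>R (J a b *\<^sub>R (s2 - s1)))"
    by (auto intro!: sum.cong simp: e)
  also have "\<dots> = (- real N) *\<^sub>R (s2 - s1)" by (rule K1)
  finally have "s1 = s2" using N_pos by simp
  then have "\<beta>1 = \<beta>2" using b1 b2 by simp
  then show ?thesis using eq by (intro ext) simp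
qed

lemma uniq3:
  fixes \<tau>1 \<tau>2 \<beta>1 \<beta>2 :: "nat list \<Rightarrow> 'v"
  assumes "alt_form N 3 \<tau>1" "trace_free n J 3 \<tau>1" "alt_form N 1 \<beta>1"
    "alt_form N 3 \<tau>2" "trace_free n J 3 \<tau>2" "alt_form N 1 \<beta>2"
    and eq: "\<And>xs. \<tau>1 xs + jwedge n J \<beta>1 xs = \<tau>2 xs + jwedge n J \<beta>2 xs"
  shows "\<tau>1 = \<tau>2"
proof -
  define h where "h a = \<beta>2 [a] - \<beta>1 [a]" for a
  have e: "\<tau>1 [a, b, c] - \<tau>2 [a, b, c] = J a b *\<^sub>R h c - J a c *\<^sub>R h b + J b c *\<^sub>R h a"
    if "a < N" "b < N" "c < N" for a b c
    using eq[of "[a, b, c]"] that unfolding h_def by (simp add: jw_3 scaleR_diff_right algebra_simps)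
  have hz: "h c = 0" if c: "c < N" for c
  proof -
    have "0 = (\<Sum>a<N. \<Sum>b<N. M a b *\<^sub>R \<tau>1 [a, b, c]) - (\<Sum>a<N. \<Sum>b<N. M a b *\<^sub>R \<tau>2 [a, b, c])"
      using assms(2,5) by (simp add: tf3_iff)
    also have "\<dots> = (\<Sum>a<N. \<Sum>b<N. M a b *\<^sub>R (\<tau>1 [a, b, c] - \<tau>2 [a, b, c]))"
      by (simp add: scaleR_diff_right sum_subtractf)
    also have "\<dots> = (\<Sum>a<N. \<Sum>b<N. M a b *\<^sub>R (J a b *\<^sub>R h c) - M a b *\<^sub>R (J a c *\<^sub>R h b)
        + M a b *\<^sub>R (J b c *\<^sub>R h a))"
      using c by (auto intro!: sum.cong simp: e scaleR_diff_right scaleR_add_right)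
    also have "\<dots> = (\<Sum>a<N. \<Sum>b<N. M a b *\<^sub>R (J a b *\<^sub>R h c)) - (\<Sum>a<N. \<Sum>b<N. M a b *\<^sub>R (J a c *\<^sub>R h b))
        + (\<Sum>a<N. \<Sum>b<N. M a b *\<^sub>R (J b c *\<^sub>R h a))"
      by (simp add: sum.distrib sum_subtractf)
    also have "\<dots> = (2 - real N) *\<^sub>R h c"
      using K1[of "h c"] K2[OF c, of h] K3[OF c, of h] by (simp add: algebra_simps scaleR_2)
    finally show ?thesis using N_pos by simp
  qed
  have "f1 N (\<lambda>a. \<beta>1 [a]) = f1 N (\<lambda>a. \<beta>2 [a])"
    using hz unfolding h_def by (intro f1_cong) simp
  then have "\<beta>1 = \<beta>2"
    using alt_eq1[OF assms(3)] alt_eq1[OF assms(6)] by simp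
  then show ?thesis using eq by (intro ext) simp
qed

lemma tf_eq:
  fixes \<Phi> \<tau> \<beta> :: "nat list \<Rightarrow> 'v"
  assumes uniq: "\<And>\<tau>1 \<tau>2 \<beta>1 \<beta>2 :: nat list \<Rightarrow> 'v. alt_form N k \<tau>1 \<Longrightarrow> trace_free n J k \<tau>1 \<Longrightarrow> alt_form N (k - 2) \<beta>1
      \<Longrightarrow> alt_form N k \<tau>2 \<Longrightarrow> trace_free n J k \<tau>2 \<Longrightarrow> alt_form N (k - 2) \<beta>2
      \<Longrightarrow> (\<And>xs. \<tau>1 xs + jwedge n J \<beta>1 xs = \<tau>2 xs + jwedge n J \<beta>2 xs) \<Longrightarrow> \<tau>1 = \<tau>2"
    and "alt_form N k \<tau>" "trace_free n J k \<tau>" "alt_form N (k - 2) \<beta>"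
    and dec: "\<And>xs. \<Phi> xs = \<tau> xs + jwedge n J \<beta> xs"
  shows "tf_part n J k \<Phi> = \<tau>"
  unfolding tf_part_def
proof (rule the_equality)
  show "alt_form N k \<tau> \<and> trace_free n J k \<tau> \<and> (\<exists>\<beta>. alt_form N (k - 2) \<beta> \<and> (\<forall>xs. \<Phi> xs = \<tau> xs + jwedge n J \<beta> xs))"
    using assms by blast
  fix \<tau>' assume "alt_form N k \<tau>' \<and> trace_free n J k \<tau>' \<and> (\<exists>\<beta>. alt_form N (k - 2) \<beta> \<and> (\<forall>xs. \<Phi> xs = \<tau>' xs + jwedge n J \<beta> xs))"
  then obtain \<beta>' where "alt_form N k \<tau>'" "trace_free n J k \<tau>'" "alt_form N (k - 2) \<beta>'"
    "\<forall>xs. \<Phi> xs = \<tau>' xs + jwedge n J \<beta>' xs" by blast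
  then show "\<tau>' = \<tau>" using uniq[of \<tau>' \<beta>' \<tau> \<beta>] assms dec by simp
qed


lemma f2_split: "f2 N' g xs = f2 N' (\<lambda>a b. g a b - h a b) xs + f2 N' h xs"
  by (auto simp: f2_def split: list.split)
lemma f3_split: "f3 N' g xs = f3 N' (\<lambda>a b c. g a b c - h a b c) xs + f3 N' h xs"
  by (auto simp: f3_def split: list.split)

lemma jw_zero: "jwedge n J (\<lambda>_. 0::'v) = (\<lambda>_. 0)"
  by (simp add: jwedge_def fun_eq_iff cong: if_cong)

lemma jw_add: "jwedge n J (\<lambda>xs. \<beta>1 xs + \<beta>2 xs) xs = jwedge n J \<beta>1 xs + jwedge n J (\<beta>2 :: nat list \<Rightarrow> 'v) xs"
proof -
  have H: "\<And>i j. (if i < j then ((-1::real) ^ (i + j + 1) * J (xs ! i) (xs ! j)) *\<^sub>R (\<beta>1 (del i (del j xs)) + \<beta>2 (del i (del j xs))) else 0)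
     = (if i < j then ((-1::real) ^ (i + j + 1) * J (xs ! i) (xs ! j)) *\<^sub>R \<beta>1 (del i (del j xs)) else 0)
     + (if i < j then ((-1::real) ^ (i + j + 1) * J (xs ! i) (xs ! j)) *\<^sub>R \<beta>2 (del i (del j xs)) else 0)"
    by (simp add: scaleR_add_right)
  show ?thesis unfolding jwedge_def by (simp only: H sum.distrib) simp
qed

lemma jw_scale: "jwedge n J (\<lambda>xs. r *\<^sub>R \<beta> xs) xs = r *\<^sub>R jwedge n J (\<beta> :: nat list \<Rightarrow> 'v) xs"
proof -
  have H: "\<And>i j. (if i < j then ((-1::real) ^ (i + j + 1) * J (xs ! i) (xs ! j)) *\<^sub>R (r *\<^sub>R \<beta> (del i (del j xs))) else 0)
     = r *\<^sub>R (if i < j then ((-1::real) ^ (i + j + 1) * J (xs ! i) (xs ! j)) *\<^sub>R \<beta> (del i (del j xs)) else 0)"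
    by (simp add: algebra_simps)
  show ?thesis
  proof (cases "set xs \<subseteq> {..<N}")
    case True then show ?thesis unfolding jwedge_def by (simp only: if_True H scaleR_sum_right)
  qed (simp add: jwedge_def)
qed

lemma trf_add: "trace_free n J k \<tau>1 \<Longrightarrow> trace_free n J k \<tau>2 \<Longrightarrow> trace_free n J k (\<lambda>xs. \<tau>1 xs + (\<tau>2 xs :: 'v))"
  unfolding trace_free_def by (simp add: scaleR_add_right sum.distrib)
lemma trf_scale: "trace_free n J k \<tau> \<Longrightarrow> trace_free n J k (\<lambda>xs. r *\<^sub>R (\<tau> xs :: 'v))"
  unfolding trace_free_def
proof (intro allI impI)
  fix cs :: "nat list" assume H: "\<forall>cs. length cs + 2 = k \<longrightarrow> (\<Sum>a<N. \<Sum>b<N. M a b *\<^sub>R \<tau> (a # b # cs)) = 0"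
    and l: "length cs + 2 = k"
  have "(\<Sum>a<N. \<Sum>b<N. M a b *\<^sub>R (r *\<^sub>R \<tau> (a # b # cs))) = r *\<^sub>R (\<Sum>a<N. \<Sum>b<N. M a b *\<^sub>R \<tau> (a # b # cs))"
    by (simp add: scaleR_sum_right mult.commute)
  then show "(\<Sum>a<N. \<Sum>b<N. M a b *\<^sub>R (r *\<^sub>R \<tau> (a # b # cs))) = 0" using H l by simp
qed
lemma trf_zero: "trace_free n J k (\<lambda>xs. 0 :: 'v)"
  unfolding trace_free_def by simp

lemma ex2:
  fixes \<Phi> :: "nat list \<Rightarrow> 'v"
  assumes alt: "alt_form N 2 \<Phi>"
  shows "\<exists>\<tau> s. alt_form N 2 \<tau> \<and> trace_free n J 2 \<tau> \<and> (\<forall>xs. \<Phi> xs = \<tau> xs + jwedge n J (f0 s) xs)"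
proof -
  define tr where "tr = (\<Sum>a<N. \<Sum>b<N. M a b *\<^sub>R \<Phi> [a, b])"
  define s where "s = (- (1 / real N)) *\<^sub>R tr"
  define \<tau> where "\<tau> = f2 N (\<lambda>a b. \<Phi> [a, b] - J a b *\<^sub>R s)"
  have A: "alt_form N 2 \<tau>" unfolding \<tau>_def
  proof (rule alt_f2)
    fix a b assume "a < N" "b < N"
    then show "\<Phi> [a, b] - J a b *\<^sub>R s = - (\<Phi> [b, a] - J b a *\<^sub>R s)"
      using alt2_anti[OF alt, of a b] Jsk[of a b] by simp
  qed
  have "(\<Sum>a<N. \<Sum>b<N. M a b *\<^sub>R \<tau> [a, b]) = (\<Sum>a<N. \<Sum>b<N. M a b *\<^sub>R \<Phi> [a, b] - M a b *\<^sub>R (J a b *\<^sub>R s))"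
    unfolding \<tau>_def by (auto intro!: sum.cong simp: scaleR_diff_right)
  also have "\<dots> = tr - (- real N) *\<^sub>R s" unfolding tr_def K1[symmetric] by (simp add: sum_subtractf)
  also have "\<dots> = 0" unfolding s_def using N_pos by simp
  finally have B: "trace_free n J 2 \<tau>" by (simp add: tf2_iff)
  have C: "\<Phi> xs = \<tau> xs + jwedge n J (f0 s) xs" for xs
    unfolding \<tau>_def jw_f0 using f2_split[of N "\<lambda>a b. \<Phi> [a, b]" xs "\<lambda>a b. J a b *\<^sub>R s"]
      alt_eq2[OF alt] by metis
  show ?thesis using A B C by blast
qed

lemma ex3:
  fixes \<Phi> :: "nat list \<Rightarrow> 'v"
  assumes alt: "alt_form N 3 \<Phi>"
  shows "\<exists>\<tau> g. alt_form N 3 \<tau> \<and> trace_free n J 3 \<tau> \<and> (\<forall>xs. \<Phi> xs = \<tau> xs + jwedge n J (f1 N g) xs)"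
proof -
  define tr where "tr c = (\<Sum>a<N. \<Sum>b<N. M a b *\<^sub>R \<Phi> [a, b, c])" for c
  define g where "g c = (1 / (2 - real N)) *\<^sub>R tr c" for c
  define G where "G a b c = J a b *\<^sub>R g c - J a c *\<^sub>R g b + J b c *\<^sub>R g a" for a b c
  define \<tau> where "\<tau> = f3 N (\<lambda>a b c. \<Phi> [a, b, c] - G a b c)"
  have A: "alt_form N 3 \<tau>" unfolding \<tau>_def
  proof (rule alt_f3)
    fix a b c assume abc: "a < N" "b < N" "c < N"
    show "\<Phi> [a, b, c] - G a b c = - (\<Phi> [b, a, c] - G b a c)"
      using alt3_anti(1)[OF alt, of a b c] Jsk[of a b] Jsk[of a c] Jsk[of b c] abc
      unfolding G_def by (simp add: algebra_simps)
    show "\<Phi> [a, b, c] - G a b c = - (\<Phi> [a, c, b] - G a c b)"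
      using alt3_anti(2)[OF alt, of a b c] Jsk[of a b] Jsk[of a c] Jsk[of b c] abc
      unfolding G_def by (simp add: algebra_simps)
    show "\<Phi> [a, b, c] - G a b c = - (\<Phi> [c, b, a] - G c b a)"
      using alt3_anti(3)[OF alt, of a b c] Jsk[of a b] Jsk[of a c] Jsk[of b c] abc
      unfolding G_def by (simp add: algebra_simps)
  qed
  have "(\<Sum>a<N. \<Sum>b<N. M a b *\<^sub>R \<tau> [a, b, c]) = 0" for c
  proof (cases "c < N")
    case c: True
    have "(\<Sum>a<N. \<Sum>b<N. M a b *\<^sub>R \<tau> [a, b, c]) = (\<Sum>a<N. \<Sum>b<N. M a b *\<^sub>R \<Phi> [a, b, c]
        - (M a b *\<^sub>R (J a b *\<^sub>R g c) - M a b *\<^sub>R (J a c *\<^sub>R g b) + M a b *\<^sub>R (J b c *\<^sub>R g a)))"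
      unfolding \<tau>_def G_def using c by (auto intro!: sum.cong simp: scaleR_diff_right scaleR_add_right)
    also have "\<dots> = tr c - ((\<Sum>a<N. \<Sum>b<N. M a b *\<^sub>R (J a b *\<^sub>R g c)) - (\<Sum>a<N. \<Sum>b<N. M a b *\<^sub>R (J a c *\<^sub>R g b))
        + (\<Sum>a<N. \<Sum>b<N. M a b *\<^sub>R (J b c *\<^sub>R g a)))"
      unfolding tr_def by (simp add: sum_subtractf sum.distrib)
    also have "\<dots> = tr c - (2 - real N) *\<^sub>R g c"
      using K1[of "g c"] K2[OF c, of g] K3[OF c, of g] by (simp add: algebra_simps scaleR_2)
    also have "\<dots> = 0" unfolding g_def using N_pos by simp
    finally show ?thesis .
  next
    case False
    then show ?thesis unfolding \<tau>_def by simp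
  qed
  then have B: "trace_free n J 3 \<tau>" by (simp add: tf3_iff)
  have C: "\<Phi> xs = \<tau> xs + jwedge n J (f1 N g) xs" for xs
    unfolding \<tau>_def jw_f1 using f3_split[of N "\<lambda>a b c. \<Phi> [a, b, c]" xs G]
      alt_eq3[OF alt] unfolding G_def by metis
  show ?thesis using A B C by blast
qed

lemma tf2_of:
  fixes \<Phi> \<tau> \<beta> :: "nat list \<Rightarrow> 'v"
  assumes "alt_form N 2 \<tau>" "trace_free n J 2 \<tau>" "alt_form N 0 \<beta>" "\<And>xs. \<Phi> xs = \<tau> xs + jwedge n J \<beta> xs"
  shows "tf_part n J 2 \<Phi> = \<tau>"
  by (rule tf_eq[where k=2]) (use uniq2 assms in auto)

lemma tf3_of:
  fixes \<Phi> \<tau> \<beta> :: "nat list \<Rightarrow> 'v"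
  assumes "alt_form N 3 \<tau>" "trace_free n J 3 \<tau>" "alt_form N 1 \<beta>" "\<And>xs. \<Phi> xs = \<tau> xs + jwedge n J \<beta> xs"
  shows "tf_part n J 3 \<Phi> = \<tau>"
  by (rule tf_eq[where k=3]) (use uniq3 assms in auto)

lemma tf2_char:
  fixes \<Phi> :: "nat list \<Rightarrow> 'v"
  assumes "alt_form N 2 \<Phi>"
  shows "alt_form N 2 (tf_part n J 2 \<Phi>) \<and> trace_free n J 2 (tf_part n J 2 \<Phi>)
     \<and> (\<exists>s. \<forall>xs. \<Phi> xs = tf_part n J 2 \<Phi> xs + jwedge n J (f0 s) xs)"
proof -
  obtain \<tau> s where "alt_form N 2 \<tau>" "trace_free n J 2 \<tau>" "\<forall>xs. \<Phi> xs = \<tau> xs + jwedge n J (f0 s) xs"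
    using ex2[OF assms] by blast
  moreover then have "tf_part n J 2 \<Phi> = \<tau>" using alt_f0 by (intro tf2_of) auto
  ultimately show ?thesis by auto
qed

lemma tf3_char:
  fixes \<Phi> :: "nat list \<Rightarrow> 'v"
  assumes "alt_form N 3 \<Phi>"
  shows "alt_form N 3 (tf_part n J 3 \<Phi>) \<and> trace_free n J 3 (tf_part n J 3 \<Phi>)
     \<and> (\<exists>g. \<forall>xs. \<Phi> xs = tf_part n J 3 \<Phi> xs + jwedge n J (f1 N g) xs)"
proof -
  obtain \<tau> g where "alt_form N 3 \<tau>" "trace_free n J 3 \<tau>" "\<forall>xs. \<Phi> xs = \<tau> xs + jwedge n J (f1 N g) xs"
    using ex3[OF assms] by blast
  moreover then have "tf_part n J 3 \<Phi> = \<tau>" using alt_f1 by (intro tf3_of) auto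
  ultimately show ?thesis by auto
qed

lemma tf2_self: "alt_form N 2 \<tau> \<Longrightarrow> trace_free n J 2 \<tau> \<Longrightarrow> tf_part n J 2 \<tau> = (\<tau> :: nat list \<Rightarrow> 'v)"
  by (rule tf2_of[where \<beta>="\<lambda>_. 0"]) (auto simp: alt_zero jw_zero)

lemma tf2_jwz: "tf_part n J 2 (jwedge n J (f0 s)) = (\<lambda>_. 0 :: 'v)"
  by (rule tf2_of[where \<beta>="f0 s"]) (auto simp: alt_zero alt_f0 trf_zero)

lemma tf3_jwz: "tf_part n J 3 (jwedge n J (f1 N g)) = (\<lambda>_. 0 :: 'v)"
  by (rule tf3_of[where \<beta>="f1 N g"], rule alt_zero, rule trf_zero, rule alt_f1) simp

lemma tf2_add:
  fixes \<Phi>1 \<Phi>2 :: "nat list \<Rightarrow> 'v"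
  assumes "alt_form N 2 \<Phi>1" "alt_form N 2 \<Phi>2"
  shows "tf_part n J 2 (\<lambda>xs. \<Phi>1 xs + \<Phi>2 xs) = (\<lambda>xs. tf_part n J 2 \<Phi>1 xs + tf_part n J 2 \<Phi>2 xs)"
proof -
  obtain s1 where 1: "alt_form N 2 (tf_part n J 2 \<Phi>1)" "trace_free n J 2 (tf_part n J 2 \<Phi>1)"
    "\<forall>xs. \<Phi>1 xs = tf_part n J 2 \<Phi>1 xs + jwedge n J (f0 s1) xs" using tf2_char[OF assms(1)] by blast
  obtain s2 where 2: "alt_form N 2 (tf_part n J 2 \<Phi>2)" "trace_free n J 2 (tf_part n J 2 \<Phi>2)"
    "\<forall>xs. \<Phi>2 xs = tf_part n J 2 \<Phi>2 xs + jwedge n J (f0 s2) xs" using tf2_char[OF assms(2)] by blast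
  show ?thesis
  proof (rule tf2_of[where \<beta>="\<lambda>xs. f0 s1 xs + f0 s2 xs"])
    show "alt_form N 2 (\<lambda>xs. tf_part n J 2 \<Phi>1 xs + tf_part n J 2 \<Phi>2 xs)" using 1 2 by (intro alt_add)
    show "trace_free n J 2 (\<lambda>xs. tf_part n J 2 \<Phi>1 xs + tf_part n J 2 \<Phi>2 xs)" using 1 2 by (intro trf_add)
    show "alt_form N 0 (\<lambda>xs. f0 s1 xs + f0 s2 xs)" by (intro alt_add alt_f0)
    fix xs show "\<Phi>1 xs + \<Phi>2 xs = tf_part n J 2 \<Phi>1 xs + tf_part n J 2 \<Phi>2 xs + jwedge n J (\<lambda>xs. f0 s1 xs + f0 s2 xs) xs"
      using 1(3) 2(3) by (simp add: jw_add)
  qed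
qed

lemma tf2_scale:
  fixes \<Phi> :: "nat list \<Rightarrow> 'v"
  assumes "alt_form N 2 \<Phi>"
  shows "tf_part n J 2 (\<lambda>xs. r *\<^sub>R \<Phi> xs) = (\<lambda>xs. r *\<^sub>R tf_part n J 2 \<Phi> xs)"
proof -
  obtain s1 where 1: "alt_form N 2 (tf_part n J 2 \<Phi>)" "trace_free n J 2 (tf_part n J 2 \<Phi>)"
    "\<forall>xs. \<Phi> xs = tf_part n J 2 \<Phi> xs + jwedge n J (f0 s1) xs" using tf2_char[OF assms(1)] by blast
  show ?thesis
  proof (rule tf2_of[where \<beta>="\<lambda>xs. r *\<^sub>R f0 s1 xs"])
    show "alt_form N 2 (\<lambda>xs. r *\<^sub>R tf_part n J 2 \<Phi> xs)" using 1 by (intro alt_scale)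
    show "trace_free n J 2 (\<lambda>xs. r *\<^sub>R tf_part n J 2 \<Phi> xs)" using 1 by (intro trf_scale)
    show "alt_form N 0 (\<lambda>xs. r *\<^sub>R f0 s1 xs)" by (intro alt_scale alt_f0)
    fix xs show "r *\<^sub>R \<Phi> xs = r *\<^sub>R tf_part n J 2 \<Phi> xs + jwedge n J (\<lambda>xs. r *\<^sub>R f0 s1 xs) xs"
      using 1(3) by (simp add: jw_scale scaleR_add_right)
  qed
qed

lemma tf2_plus_jw:
  fixes \<Phi> \<Psi> :: "nat list \<Rightarrow> 'v"
  assumes "alt_form N 2 \<Phi>" "\<And>xs. \<Psi> xs = \<Phi> xs + jwedge n J (f0 s) xs"
  shows "tf_part n J 2 \<Psi> = tf_part n J 2 \<Phi>"
proof -
  obtain s1 where 1: "alt_form N 2 (tf_part n J 2 \<Phi>)" "trace_free n J 2 (tf_part n J 2 \<Phi>)"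
    "\<forall>xs. \<Phi> xs = tf_part n J 2 \<Phi> xs + jwedge n J (f0 s1) xs" using tf2_char[OF assms(1)] by blast
  show ?thesis
  proof (rule tf2_of[where \<beta>="\<lambda>xs. f0 s1 xs + f0 s xs"])
    show "alt_form N 0 (\<lambda>xs. f0 s1 xs + f0 s xs)" by (intro alt_add alt_f0)
    fix xs show "\<Psi> xs = tf_part n J 2 \<Phi> xs + jwedge n J (\<lambda>xs. f0 s1 xs + f0 s xs) xs"
      using 1(3) assms(2) by (simp add: jw_add)
  qed (use 1 in auto)
qed

end

context heis begin

lemma ce_f0: "ce_d n J D T (f0 v) = f1 (Suc N) (\<lambda>x. rho n D T x v)"
proof (rule f1_ext)
  fix xs :: "nat list" assume "length xs \<noteq> 1"
  then show "ce_d n J D T (f0 v) xs = 0" by (intro ce_len[where k=0, OF D_lin T_lin]) (auto simp: f0_len)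
qed (auto simp: ce_1 ce_out)

lemma ce_f1: "ce_d n J D T (f1 (Suc N) w) = f2 (Suc N) (\<lambda>x y. rho n D T x (w y) - rho n D T y (w x) - Jh n J x y *\<^sub>R w N)"
proof (rule f2_ext)
  fix xs :: "nat list" assume "length xs \<noteq> 2"
  then show "ce_d n J D T (f1 (Suc N) w) xs = 0" by (intro ce_len[where k=1, OF D_lin T_lin]) (auto simp: f1_len)
next
  fix a b assume "a < Suc N" "b < Suc N"
  then show "ce_d n J D T (f1 (Suc N) w) [a, b] = rho n D T a (w b) - rho n D T b (w a) - Jh n J a b *\<^sub>R w N"
    by (simp add: ce_2)
next
  fix xs :: "nat list" assume "\<not> set xs \<subseteq> {..<Suc N}"
  then show "ce_d n J D T (f1 (Suc N) w) xs = 0" by (rule ce_out)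
qed

lemma ce_f2: "ce_d n J D T (f2 (Suc N) W) = f3 (Suc N) (\<lambda>x y z. rho n D T x (W y z) - rho n D T y (W x z) + rho n D T z (W x y)
      - Jh n J x y *\<^sub>R W N z + Jh n J x z *\<^sub>R W N y - Jh n J y z *\<^sub>R W N x)"
proof (rule f3_ext)
  fix xs :: "nat list" assume "length xs \<noteq> 3"
  then show "ce_d n J D T (f2 (Suc N) W) xs = 0" by (intro ce_len[where k=2, OF D_lin T_lin]) (auto simp: f2_len)
next
  fix a b c assume "a < Suc N" "b < Suc N" "c < Suc N"
  then show "ce_d n J D T (f2 (Suc N) W) [a, b, c] = rho n D T a (W b c) - rho n D T b (W a c) + rho n D T c (W a b)
      - Jh n J a b *\<^sub>R W N c + Jh n J a c *\<^sub>R W N b - Jh n J b c *\<^sub>R W N a"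
    by (simp add: ce_3)
next
  fix xs :: "nat list" assume "\<not> set xs \<subseteq> {..<Suc N}"
  then show "ce_d n J D T (f2 (Suc N) W) xs = 0" by (rule ce_out)
qed

lemma f1_zero_iff: "f1 N' g = (\<lambda>_. 0) \<longleftrightarrow> (\<forall>a<N'. g a = 0)"
proof
  assume "f1 N' g = (\<lambda>_. 0)"
  then show "\<forall>a<N'. g a = 0"
  proof (intro allI impI)
    fix a assume "f1 N' g = (\<lambda>_. 0)" "a < N'"
    then have "f1 N' g [a] = 0" by simp
    then show "g a = 0" using \<open>a < N'\<close> by simp
  qed
qed (auto simp: f1_def fun_eq_iff split: list.split)
lemma f2_zero_iff: "f2 N' g = (\<lambda>_. 0) \<longleftrightarrow> (\<forall>a<N'. \<forall>b<N'. g a b = 0)"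
proof
  assume "f2 N' g = (\<lambda>_. 0)"
  then show "\<forall>a<N'. \<forall>b<N'. g a b = 0"
  proof (intro allI impI)
    fix a b assume "f2 N' g = (\<lambda>_. 0)" "a < N'" "b < N'"
    then have "f2 N' g [a, b] = 0" by simp
    then show "g a b = 0" using \<open>a < N'\<close> \<open>b < N'\<close> by simp
  qed
qed (auto simp: f2_def fun_eq_iff split: list.split)
lemma f3_zero_iff: "f3 N' g = (\<lambda>_. 0) \<longleftrightarrow> (\<forall>a<N'. \<forall>b<N'. \<forall>c<N'. g a b c = 0)"
proof
  assume "f3 N' g = (\<lambda>_. 0)"
  then show "\<forall>a<N'. \<forall>b<N'. \<forall>c<N'. g a b c = 0"
  proof (intro allI impI)
    fix a b c assume "f3 N' g = (\<lambda>_. 0)" "a < N'" "b < N'" "c < N'"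
    then have "f3 N' g [a, b, c] = 0" by simp
    then show "g a b c = 0" using \<open>a < N'\<close> \<open>b < N'\<close> \<open>c < N'\<close> by simp
  qed
qed (auto simp: f3_def fun_eq_iff split: list.split)

lemma f1_add: "f1 N' (\<lambda>a. g a + h a) = (\<lambda>xs. f1 N' g xs + f1 N' h xs)"
  by (auto simp: f1_def fun_eq_iff split: list.split)
lemma f1_scale: "f1 N' (\<lambda>a. r *\<^sub>R g a) = (\<lambda>xs. r *\<^sub>R f1 N' g xs)"
  by (auto simp: f1_def fun_eq_iff split: list.split)
lemma f2_add: "f2 N' (\<lambda>a b. g a b + h a b) = (\<lambda>xs. f2 N' g xs + f2 N' h xs)"
  by (auto simp: f2_def fun_eq_iff split: list.split)
lemma f2_scale: "f2 N' (\<lambda>a b. r *\<^sub>R g a b) = (\<lambda>xs. r *\<^sub>R f2 N' g xs)"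
  by (auto simp: f2_def fun_eq_iff split: list.split)

lemma J_nz: "\<exists>a b. a < N \<and> b < N \<and> J a b \<noteq> 0"
proof (rule ccontr)
  assume "\<not> ?thesis"
  then have "\<forall>b<N. (\<Sum>a<N. (\<lambda>_. 1::real) a * J a b) = 0" by auto
  then have H: "\<forall>b<N. (\<Sum>a<N. 1 * J a b) = 0" by simp
  have "(\<lambda>_. 1::real) 0 = 0"
    by (rule J_nondeg[rule_format, of "\<lambda>_. 1" 0]) (use H n3 in auto)
  then show False by simp
qed

lemma T_kill: "(\<And>a. a < N \<Longrightarrow> D a v = 0) \<Longrightarrow> T v = 0"
proof -
  assume H: "\<And>a. a < N \<Longrightarrow> D a v = 0"
  obtain a b where ab: "a < N" "b < N" "J a b \<noteq> 0" using J_nz by blast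
  have "J a b *\<^sub>R T v = D a (D b v) - D b (D a v)" using rep_bracket[rule_format, OF ab(1,2)] by simp
  also have "\<dots> = 0" using H ab D_zero by simp
  finally show ?thesis using ab by simp
qed

lemma contr3: "c < N \<Longrightarrow> (\<Sum>a<N. \<Sum>b<N. M a b *\<^sub>R (J a b *\<^sub>R u c - J a c *\<^sub>R u b + J b c *\<^sub>R (u a :: 'v)))
    = (2 - real N) *\<^sub>R u c"
proof -
  assume c: "c < N"
  have "(\<Sum>a<N. \<Sum>b<N. M a b *\<^sub>R (J a b *\<^sub>R u c - J a c *\<^sub>R u b + J b c *\<^sub>R u a))
     = (\<Sum>a<N. \<Sum>b<N. M a b *\<^sub>R (J a b *\<^sub>R u c) - M a b *\<^sub>R (J a c *\<^sub>R u b) + M a b *\<^sub>R (J b c *\<^sub>R u a))"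
    by (simp add: scaleR_diff_right scaleR_add_right)
  also have "\<dots> = (\<Sum>a<N. \<Sum>b<N. M a b *\<^sub>R (J a b *\<^sub>R u c)) - (\<Sum>a<N. \<Sum>b<N. M a b *\<^sub>R (J a c *\<^sub>R u b))
        + (\<Sum>a<N. \<Sum>b<N. M a b *\<^sub>R (J b c *\<^sub>R u a))"
    by (simp add: sum.distrib sum_subtractf)
  also have "\<dots> = (2 - real N) *\<^sub>R u c"
    using K1[of "u c"] K2[OF c, of u] K3[OF c, of u] by (simp add: algebra_simps scaleR_2)
  finally show ?thesis .
qed

lemma Jinj1:
  assumes H: "\<And>a b c. a < N \<Longrightarrow> b < N \<Longrightarrow> c < N \<Longrightarrow> J a b *\<^sub>R u c - J a c *\<^sub>R u b + J b c *\<^sub>R u a = (0::'v)"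
    and c: "c < N"
  shows "u c = 0"
proof -
  have "(2 - real N) *\<^sub>R u c = (\<Sum>a<N. \<Sum>b<N. M a b *\<^sub>R (J a b *\<^sub>R u c - J a c *\<^sub>R u b + J b c *\<^sub>R u a))"
    using contr3[OF c] by simp
  also have "\<dots> = 0" using H c by (auto intro!: sum.neutral)
  finally show ?thesis using N_pos by simp
qed

lemma scaleR_4: "(4::real) *\<^sub>R x = x + x + x + (x::'v)"
proof -
  have "(4::real) *\<^sub>R x = (2 + 2) *\<^sub>R x" by simp
  also have "\<dots> = x + x + x + x" by (simp only: scaleR_add_left scaleR_2 add.assoc)
  finally show ?thesis .
qed

definition jw4 :: "(nat \<Rightarrow> nat \<Rightarrow> 'v) \<Rightarrow> nat \<Rightarrow> nat \<Rightarrow> nat \<Rightarrow> nat \<Rightarrow> 'v" where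
  "jw4 g a b c d = J a b *\<^sub>R g c d - J a c *\<^sub>R g b d + J a d *\<^sub>R g b c + J b c *\<^sub>R g a d - J b d *\<^sub>R g a c + J c d *\<^sub>R g a b"

lemma contr4:
  assumes anti: "\<And>a b. a < N \<Longrightarrow> b < N \<Longrightarrow> g a b = - g b a" and cd: "c < N" "d < N"
  shows "(\<Sum>a<N. \<Sum>b<N. M a b *\<^sub>R jw4 g a b c d)
     = (4 - real N) *\<^sub>R g c d + J c d *\<^sub>R (\<Sum>a<N. \<Sum>b<N. M a b *\<^sub>R g a b)"
proof -
  have "(\<Sum>a<N. \<Sum>b<N. M a b *\<^sub>R jw4 g a b c d)
     = (\<Sum>a<N. \<Sum>b<N. M a b *\<^sub>R (J a b *\<^sub>R g c d) - M a b *\<^sub>R (J a c *\<^sub>R g b d) + M a b *\<^sub>R (J a d *\<^sub>R g b c)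
        + M a b *\<^sub>R (J b c *\<^sub>R g a d) - M a b *\<^sub>R (J b d *\<^sub>R g a c) + M a b *\<^sub>R (J c d *\<^sub>R g a b))"
    unfolding jw4_def by (simp add: scaleR_diff_right scaleR_add_right)
  also have "\<dots> = (\<Sum>a<N. \<Sum>b<N. M a b *\<^sub>R (J a b *\<^sub>R g c d)) - (\<Sum>a<N. \<Sum>b<N. M a b *\<^sub>R (J a c *\<^sub>R g b d))
       + (\<Sum>a<N. \<Sum>b<N. M a b *\<^sub>R (J a d *\<^sub>R g b c)) + (\<Sum>a<N. \<Sum>b<N. M a b *\<^sub>R (J b c *\<^sub>R g a d))
       - (\<Sum>a<N. \<Sum>b<N. M a b *\<^sub>R (J b d *\<^sub>R g a c)) + (\<Sum>a<N. \<Sum>b<N. M a b *\<^sub>R (J c d *\<^sub>R g a b))"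
    by (simp add: sum.distrib sum_subtractf)
  also have "(\<Sum>a<N. \<Sum>b<N. M a b *\<^sub>R (J c d *\<^sub>R g a b)) = J c d *\<^sub>R (\<Sum>a<N. \<Sum>b<N. M a b *\<^sub>R g a b)"
    by (simp add: scaleR_sum_right mult.commute)
  also have "(\<Sum>a<N. \<Sum>b<N. M a b *\<^sub>R (J a b *\<^sub>R g c d)) = (- real N) *\<^sub>R g c d" by (rule K1)
  also have "(\<Sum>a<N. \<Sum>b<N. M a b *\<^sub>R (J a c *\<^sub>R g b d)) = - g c d" using K2[OF cd(1), of "\<lambda>b. g b d"] by simp
  also have "(\<Sum>a<N. \<Sum>b<N. M a b *\<^sub>R (J a d *\<^sub>R g b c)) = g c d" using K2[OF cd(2), of "\<lambda>b. g b c"] anti[OF cd(2,1)] by simp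
  also have "(\<Sum>a<N. \<Sum>b<N. M a b *\<^sub>R (J b c *\<^sub>R g a d)) = g c d" using K3[OF cd(1), of "\<lambda>a. g a d"] by simp
  also have "(\<Sum>a<N. \<Sum>b<N. M a b *\<^sub>R (J b d *\<^sub>R g a c)) = - g c d" using K3[OF cd(2), of "\<lambda>a. g a c"] anti[OF cd(2,1)] by simp
  finally show ?thesis by (simp add: algebra_simps scaleR_2 scaleR_4)
qed

lemma Jinj2:
  assumes anti: "\<And>a b. a < N \<Longrightarrow> b < N \<Longrightarrow> g a b = - g b a"
    and H: "\<And>a b c d. a < N \<Longrightarrow> b < N \<Longrightarrow> c < N \<Longrightarrow> d < N \<Longrightarrow> jw4 g a b c d = 0"
    and cd: "c < N" "d < N"
  shows "g c d = 0"
proof -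
  define tr where "tr = (\<Sum>a<N. \<Sum>b<N. M a b *\<^sub>R g a b)"
  have E: "(4 - real N) *\<^sub>R g c d + J c d *\<^sub>R tr = 0" if "c < N" "d < N" for c d
  proof -
    have "(4 - real N) *\<^sub>R g c d + J c d *\<^sub>R tr = (\<Sum>a<N. \<Sum>b<N. M a b *\<^sub>R jw4 g a b c d)"
      using contr4[OF anti that] unfolding tr_def by simp
    also have "\<dots> = 0" using H that by (auto intro!: sum.neutral)
    finally show ?thesis .
  qed
  have "0 = (\<Sum>c<N. \<Sum>d<N. M c d *\<^sub>R ((4 - real N) *\<^sub>R g c d + J c d *\<^sub>R tr))"
    using E by (auto intro!: sum.neutral[symmetric])
  also have "\<dots> = (\<Sum>c<N. \<Sum>d<N. (4 - real N) *\<^sub>R (M c d *\<^sub>R g c d)) + (\<Sum>c<N. \<Sum>d<N. M c d *\<^sub>R (J c d *\<^sub>R tr))"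
    by (simp add: scaleR_add_right sum.distrib mult.commute)
  also have "\<dots> = (4 - real N) *\<^sub>R tr + (- real N) *\<^sub>R tr"
    unfolding K1 tr_def by (simp add: scaleR_sum_right)
  also have "\<dots> = ((4 - real N) + (- real N)) *\<^sub>R tr" by (rule scaleR_add_left[symmetric])
  finally have "(4 - 2 * real N) *\<^sub>R tr = 0" by simp
  then have "tr = 0" using N_pos by simp
  then have "(4 - real N) *\<^sub>R g c d = 0" using E[OF cd] by simp
  then show ?thesis using N_pos by simp
qed

end

context heis begin

lemma keyK:
  fixes \<tau> :: "nat \<Rightarrow> nat \<Rightarrow> 'v" and \<beta> :: "nat \<Rightarrow> 'v"
  assumes anti: "\<And>a b. a < N \<Longrightarrow> b < N \<Longrightarrow> \<tau> a b = - \<tau> b a"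
    and E: "\<And>a b c. a < N \<Longrightarrow> b < N \<Longrightarrow> c < N \<Longrightarrow>
      D a (\<tau> b c) - D b (\<tau> a c) + D c (\<tau> a b) = J a b *\<^sub>R \<beta> c - J a c *\<^sub>R \<beta> b + J b c *\<^sub>R \<beta> a"
    and ab: "a < N" "b < N"
  shows "D a (\<beta> b) - D b (\<beta> a) = T (\<tau> a b)"
proof -
  define \<gamma> where "\<gamma> x y = D x (\<beta> y) - D y (\<beta> x) - T (\<tau> x y)" for x y
  have ganti: "\<gamma> x y = - \<gamma> y x" if "x < N" "y < N" for x y
    unfolding \<gamma>_def using anti[OF that] by (simp add: T_neg)
  have H: "jw4 \<gamma> a b c d = 0" if abcd: "a < N" "b < N" "c < N" "d < N" for a b c d
  proof -
    define L where "L x y z = D x (\<tau> y z) - D y (\<tau> x z) + D z (\<tau> x y)" for x y z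
    define R where "R x y z = J x y *\<^sub>R \<beta> z - J x z *\<^sub>R \<beta> y + J y z *\<^sub>R \<beta> x" for x y z
    have LR: "L x y z = R x y z" if "x < N" "y < N" "z < N" for x y z
      unfolding L_def R_def using E[OF that] .
    have SL: "D a (L b c d) - D b (L a c d) + D c (L a b d) - D d (L a b c) = jw4 (\<lambda>x y. T (\<tau> x y)) a b c d"
    proof -
      have b1: "D a (D b (\<tau> c d)) = D b (D a (\<tau> c d)) + J a b *\<^sub>R T (\<tau> c d)" using brk abcd by blast
      have b2: "D a (D c (\<tau> b d)) = D c (D a (\<tau> b d)) + J a c *\<^sub>R T (\<tau> b d)" using brk abcd by blast
      have b3: "D a (D d (\<tau> b c)) = D d (D a (\<tau> b c)) + J a d *\<^sub>R T (\<tau> b c)" using brk abcd by blast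
      have b4: "D b (D c (\<tau> a d)) = D c (D b (\<tau> a d)) + J b c *\<^sub>R T (\<tau> a d)" using brk abcd by blast
      have b5: "D b (D d (\<tau> a c)) = D d (D b (\<tau> a c)) + J b d *\<^sub>R T (\<tau> a c)" using brk abcd by blast
      have b6: "D c (D d (\<tau> a b)) = D d (D c (\<tau> a b)) + J c d *\<^sub>R T (\<tau> a b)" using brk abcd by blast
      show ?thesis unfolding L_def jw4_def using abcd
        by (simp add: D_add D_diff b1 b2 b3 b4 b5 b6 algebra_simps)
    qed
    have SR: "D a (R b c d) - D b (R a c d) + D c (R a b d) - D d (R a b c)
        = jw4 (\<lambda>x y. D x (\<beta> y) - D y (\<beta> x)) a b c d"
      unfolding R_def jw4_def using abcd by (simp add: D_add D_diff D_scale algebra_simps)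
    have "jw4 \<gamma> a b c d = jw4 (\<lambda>x y. D x (\<beta> y) - D y (\<beta> x)) a b c d - jw4 (\<lambda>x y. T (\<tau> x y)) a b c d"
      unfolding jw4_def \<gamma>_def by (simp add: algebra_simps)
    also have "\<dots> = 0" using SL SR LR abcd by simp
    finally show ?thesis .
  qed
  have "\<gamma> a b = 0" using Jinj2[of \<gamma>, OF ganti H ab] by blast
  then show ?thesis unfolding \<gamma>_def by simp
qed

end

context heis begin

lemma alt0_iff: "alt_form N' 0 \<omega> \<longleftrightarrow> \<omega> = f0 (\<omega> [])"
  using alt_eq0[of N' \<omega>] alt_f0[of N' "\<omega> []"] by metis

lemma trf01: "trace_free n J 0 \<omega>" "trace_free n J 1 \<omega>"
  unfolding trace_free_def by auto

lemma allzero: "(\<forall>xs. F xs = 0) \<longleftrightarrow> F = (\<lambda>_. 0)"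
  by (auto simp: fun_eq_iff)

lemma rho_zero_iff: "(\<forall>x<Suc N. rho n D T x v = 0) \<longleftrightarrow> (\<forall>a<N. D a v = 0)"
proof
  assume "\<forall>x<Suc N. rho n D T x v = 0"
  then show "\<forall>a<N. D a v = 0" by (metis less_SucI rho_lt)
next
  assume H: "\<forall>a<N. D a v = 0"
  then have "T v = 0" using T_kill by blast
  then show "\<forall>x<Suc N. rho n D T x v = 0" using H by (auto simp: less_Suc_eq)
qed

lemma case0: "quot_iso (cyc (ce_sp n) (\<lambda>_. ce_d n J D T) 0) (bdry (ce_sp n) (\<lambda>_. ce_d n J D T) 0)
            (cyc (rsp n J) (rd n J D) 0) (bdry (rsp n J) (rd n J D) 0)"
proof -
  have Z: "cyc (ce_sp n) (\<lambda>_. ce_d n J D T) 0 = cyc (rsp n J) (rd n J D) 0"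
    unfolding set_eq_iff
  proof (intro allI)
    fix \<omega> :: "nat list \<Rightarrow> 'v"
    show "\<omega> \<in> cyc (ce_sp n) (\<lambda>_. ce_d n J D T) 0 \<longleftrightarrow> \<omega> \<in> cyc (rsp n J) (rd n J D) 0"
    proof (cases "\<omega> = f0 (\<omega> [])")
      case True
      define v where "v = \<omega> []"
      have w: "\<omega> = f0 v" using True v_def by simp
      have "\<omega> \<in> cyc (ce_sp n) (\<lambda>_. ce_d n J D T) 0 \<longleftrightarrow> ce_d n J D T (f0 v) = (\<lambda>_. 0)"
        unfolding cyc_def ce_sp_def w by (simp add: alt_f0 allzero)
      also have "\<dots> \<longleftrightarrow> (\<forall>x<Suc N. rho n D T x v = 0)" by (simp only: ce_f0 f1_zero_iff)
      also have "\<dots> \<longleftrightarrow> (\<forall>a<N. D a v = 0)" by (rule rho_zero_iff)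
      also have "\<dots> \<longleftrightarrow> eth n D (f0 v) = (\<lambda>_. 0)" by (simp only: eth_f0 f1_zero_iff)
      also have "\<dots> \<longleftrightarrow> \<omega> \<in> cyc (rsp n J) (rd n J D) 0"
        unfolding cyc_def rsp_def rd_def w by (simp add: alt_f0 allzero trf01)
      finally show ?thesis .
    next
      case False
      then have "\<not> alt_form (Suc N) 0 \<omega>" "\<not> alt_form N 0 \<omega>" using alt0_iff by blast+
      then show ?thesis unfolding cyc_def ce_sp_def rsp_def by simp
    qed
  qed
  have B1: "bdry (ce_sp n) (\<lambda>_. ce_d n J D T) 0 = {\<lambda>_. 0}" by (simp add: bdry_def)
  have B2: "bdry (rsp n J) (rd n J D) 0 = {\<lambda>_. (0::'v)}" by (simp add: bdry_def)
  show ?thesis unfolding quot_iso_def B1 B2 Z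
  proof (intro exI[of _ "\<lambda>x. x"] conjI ballI allI impI)
    fix z assume z: "z \<in> cyc (rsp n J) (rd n J D) 0"
    show "\<exists>x\<in>cyc (rsp n J) (rd n J D) 0. (\<lambda>i. z i - x i) \<in> {\<lambda>_. 0}"
      by (rule bexI[of _ z]) (use z in auto)
  qed auto
qed

end

context heis begin

lemma alt_f1': "alt_form N' (Suc 0) (f1 N' g)" using alt_f1 by simp

lemma c1_Z1:
  assumes "\<omega> \<in> cyc (ce_sp n) (\<lambda>_. ce_d n J D T) 1"
  shows "\<omega> = f1 (Suc N) (\<lambda>a. \<omega> [a])"
    "\<And>x y. x < Suc N \<Longrightarrow> y < Suc N \<Longrightarrow> rho n D T x (\<omega> [y]) - rho n D T y (\<omega> [x]) - Jh n J x y *\<^sub>R \<omega> [N] = 0"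
proof -
  have alt: "alt_form (Suc N) 1 \<omega>" and z: "\<forall>xs. ce_d n J D T \<omega> xs = 0"
    using assms unfolding cyc_def ce_sp_def by auto
  show w: "\<omega> = f1 (Suc N) (\<lambda>a. \<omega> [a])" using alt_eq1[OF alt] .
  have "ce_d n J D T (f1 (Suc N) (\<lambda>a. \<omega> [a])) = (\<lambda>_. 0)" using z w allzero by metis
  then have "\<forall>x<Suc N. \<forall>y<Suc N. rho n D T x (\<omega> [y]) - rho n D T y (\<omega> [x]) - Jh n J x y *\<^sub>R \<omega> [N] = 0"
    unfolding ce_f1 f2_zero_iff .
  then show "\<And>x y. x < Suc N \<Longrightarrow> y < Suc N \<Longrightarrow> rho n D T x (\<omega> [y]) - rho n D T y (\<omega> [x]) - Jh n J x y *\<^sub>R \<omega> [N] = 0"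
    by blast
qed

lemma c1_Z1_intro:
  assumes "\<And>x y. x < Suc N \<Longrightarrow> y < Suc N \<Longrightarrow> rho n D T x (w y) - rho n D T y (w x) - Jh n J x y *\<^sub>R w N = 0"
  shows "f1 (Suc N) w \<in> cyc (ce_sp n) (\<lambda>_. ce_d n J D T) 1"
proof -
  have "ce_d n J D T (f1 (Suc N) w) = (\<lambda>_. 0)" unfolding ce_f1 f2_zero_iff using assms by blast
  then show ?thesis unfolding cyc_def ce_sp_def by (simp add: alt_f1 alt_f1')
qed

lemma eth1_alt: "alt_form N 2 (eth n D (f1 N w))"
  unfolding eth_f1 by (rule alt_f2) simp

lemma c1_Z2:
  "\<omega> \<in> cyc (rsp n J) (rd n J D) 1 \<longleftrightarrow>
     \<omega> = f1 N (\<lambda>a. \<omega> [a]) \<and> (\<exists>s. \<forall>a<N. \<forall>b<N. D a (\<omega> [b]) - D b (\<omega> [a]) = J a b *\<^sub>R s)"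
proof -
  have rd1: "rd n J D 1 \<omega> = tf_part n J 2 (eth n D \<omega>)" by (simp add: rd_def numeral_2_eq_2)
  have rd1': "rd n J D (Suc 0) \<omega> = tf_part n J 2 (eth n D \<omega>)" by (simp add: rd_def numeral_2_eq_2)
  have trf1': "trace_free n J (Suc 0) \<omega>" using trf01(2) by simp
  have "\<omega> \<in> cyc (rsp n J) (rd n J D) 1 \<longleftrightarrow> alt_form N 1 \<omega> \<and> tf_part n J 2 (eth n D \<omega>) = (\<lambda>_. 0)"
    unfolding cyc_def rsp_def rd1 by (simp add: trf01 allzero rd1' trf1')
  also have "\<dots> \<longleftrightarrow> \<omega> = f1 N (\<lambda>a. \<omega> [a]) \<and> (\<exists>s. \<forall>a<N. \<forall>b<N. D a (\<omega> [b]) - D b (\<omega> [a]) = J a b *\<^sub>R s)"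
  proof (cases "\<omega> = f1 N (\<lambda>a. \<omega> [a])")
    case True
    define w where "w = (\<lambda>a. \<omega> [a])"
    have w: "\<omega> = f1 N w" using True unfolding w_def .
    have "tf_part n J 2 (eth n D \<omega>) = (\<lambda>_. 0) \<longleftrightarrow> (\<exists>s. \<forall>a<N. \<forall>b<N. D a (w b) - D b (w a) = J a b *\<^sub>R s)"
    proof
      assume tz: "tf_part n J 2 (eth n D \<omega>) = (\<lambda>_. 0)"
      obtain s where s: "\<forall>xs. eth n D (f1 N w) xs = tf_part n J 2 (eth n D (f1 N w)) xs + jwedge n J (f0 s) xs"
        using tf2_char[OF eth1_alt[of w]] by blast
      have "\<forall>a<N. \<forall>b<N. D a (w b) - D b (w a) = J a b *\<^sub>R s"
      proof (intro allI impI)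
        fix a b assume ab: "a < N" "b < N"
        have "eth n D (f1 N w) [a, b] = jwedge n J (f0 s) [a, b]" using s tz w by simp
        then show "D a (w b) - D b (w a) = J a b *\<^sub>R s" using ab unfolding eth_f1 jw_f0 by simp
      qed
      then show "\<exists>s. \<forall>a<N. \<forall>b<N. D a (w b) - D b (w a) = J a b *\<^sub>R s" by blast
    next
      assume "\<exists>s. \<forall>a<N. \<forall>b<N. D a (w b) - D b (w a) = J a b *\<^sub>R s"
      then obtain s where s: "\<forall>a<N. \<forall>b<N. D a (w b) - D b (w a) = J a b *\<^sub>R s" by blast
      have "eth n D (f1 N w) = jwedge n J (f0 s)"
        unfolding eth_f1 jw_f0 using s by (intro f2_cong) simp
      then show "tf_part n J 2 (eth n D \<omega>) = (\<lambda>_. 0)" using w by (simp add: tf2_jwz)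
    qed
    moreover have "alt_form N 1 \<omega>" using alt_f1[of N w] w by simp
    ultimately show ?thesis using True unfolding w_def by blast
  next
    case False
    then show ?thesis using alt_eq1 by metis
  qed
  finally show ?thesis .
qed


lemma u_lemma1:
  assumes E: "\<And>x y. x < N \<Longrightarrow> y < N \<Longrightarrow> D x (w y) - D y (w x) = J x y *\<^sub>R s"
    and c: "c < N"
  shows "D c s = T (w c)"
proof -
  define u where "u c = D c s - T (w c)" for c
  have "u c = 0"
  proof (rule Jinj1[OF _ c])
    fix a b c assume abc: "a < N" "b < N" "c < N"
    have Q1: "D a (D b (w c) - D c (w b)) - D b (D a (w c) - D c (w a)) + D c (D a (w b) - D b (w a))
        = J b c *\<^sub>R D a s - J a c *\<^sub>R D b s + J a b *\<^sub>R D c s"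
      using abc by (simp add: E D_scale)
    have b1: "D a (D b (w c)) = D b (D a (w c)) + J a b *\<^sub>R T (w c)" using brk abc by blast
    have b2: "D a (D c (w b)) = D c (D a (w b)) + J a c *\<^sub>R T (w b)" using brk abc by blast
    have b3: "D b (D c (w a)) = D c (D b (w a)) + J b c *\<^sub>R T (w a)" using brk abc by blast
    have Q2: "D a (D b (w c) - D c (w b)) - D b (D a (w c) - D c (w a)) + D c (D a (w b) - D b (w a))
        = J a b *\<^sub>R T (w c) - J a c *\<^sub>R T (w b) + J b c *\<^sub>R T (w a)"
      using abc by (simp add: D_diff b1 b2 b3 algebra_simps)
    have eq: "J b c *\<^sub>R D a s - J a c *\<^sub>R D b s + J a b *\<^sub>R D c s
        = J a b *\<^sub>R T (w c) - J a c *\<^sub>R T (w b) + J b c *\<^sub>R T (w a)"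
      using Q1[symmetric] Q2 by (rule trans)
    have "J a b *\<^sub>R u c - J a c *\<^sub>R u b + J b c *\<^sub>R u a
       = (J b c *\<^sub>R D a s - J a c *\<^sub>R D b s + J a b *\<^sub>R D c s)
         - (J a b *\<^sub>R T (w c) - J a c *\<^sub>R T (w b) + J b c *\<^sub>R T (w a))"
      unfolding u_def by (simp add: algebra_simps)
    also have "\<dots> = 0" using eq by simp
    finally show "J a b *\<^sub>R u c - J a c *\<^sub>R u b + J b c *\<^sub>R u a = 0" .
  qed
  then show ?thesis unfolding u_def by simp
qed

lemma case1: "quot_iso (cyc (ce_sp n) (\<lambda>_. ce_d n J D T) 1) (bdry (ce_sp n) (\<lambda>_. ce_d n J D T) 1)
            (cyc (rsp n J) (rd n J D) 1) (bdry (rsp n J) (rd n J D) 1)"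
proof -
  have B1: "bdry (ce_sp n) (\<lambda>_. ce_d n J D T) 1 = ce_d n J D T ` ce_sp n 0" by (simp add: bdry_def)
  have B2: "bdry (rsp n J) (rd n J D) 1 = eth n D ` rsp n J 0" by (simp add: bdry_def rd_def)
  define f where "f \<omega> = f1 N (\<lambda>a. \<omega> [a])" for \<omega> :: "nat list \<Rightarrow> 'v"
  have rsp0: "f0 v \<in> rsp n J 0" for v :: 'v unfolding rsp_def by (simp add: alt_f0 trf01)
  show ?thesis unfolding quot_iso_def B1 B2
  proof (intro exI[of _ f] conjI ballI allI impI)
    fix x y :: "nat list \<Rightarrow> 'v"
    show "f (\<lambda>i. x i + y i) = (\<lambda>i. f x i + f y i)" unfolding f_def by (rule f1_add)
  next
    fix c x
    show "f (\<lambda>i. c *\<^sub>R x i) = (\<lambda>i. c *\<^sub>R f x i)" unfolding f_def by (rule f1_scale)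
  next
    show "f ` cyc (ce_sp n) (\<lambda>_. ce_d n J D T) 1 \<subseteq> cyc (rsp n J) (rd n J D) 1"
    proof
      fix z assume "z \<in> f ` cyc (ce_sp n) (\<lambda>_. ce_d n J D T) 1"
      then obtain \<omega> where \<omega>: "\<omega> \<in> cyc (ce_sp n) (\<lambda>_. ce_d n J D T) 1" and z: "z = f \<omega>" by blast
      have C: "D a (\<omega> [b]) - D b (\<omega> [a]) = J a b *\<^sub>R \<omega> [N]" if "a < N" "b < N" for a b
        using c1_Z1(2)[OF \<omega>, of a b] that by simp
      have "f \<omega> = f1 N (\<lambda>a. f \<omega> [a])" unfolding f_def by (rule f1_cong) simp
      moreover have "\<forall>a<N. \<forall>b<N. D a (f \<omega> [b]) - D b (f \<omega> [a]) = J a b *\<^sub>R \<omega> [N]"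
        unfolding f_def using C by simp
      ultimately show "z \<in> cyc (rsp n J) (rd n J D) 1" unfolding z c1_Z2 by blast
    qed
  next
    show "f ` ce_d n J D T ` ce_sp n 0 \<subseteq> eth n D ` rsp n J 0"
    proof
      fix z assume "z \<in> f ` ce_d n J D T ` ce_sp n 0"
      then obtain \<eta> where \<eta>: "\<eta> \<in> ce_sp n 0" and z: "z = f (ce_d n J D T \<eta>)" by blast
      define v where "v = \<eta> []"
      have e: "\<eta> = f0 v" using \<eta> alt_eq0 unfolding ce_sp_def v_def by blast
      have "z = f1 N (\<lambda>a. D a v)" unfolding z f_def e ce_f0 by (rule f1_cong) simp
      also have "\<dots> = eth n D (f0 v)" by (simp add: eth_f0)
      finally show "z \<in> eth n D ` rsp n J 0" using rsp0 by blast
    qed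
  next
    fix z assume z: "z \<in> cyc (rsp n J) (rd n J D) 1"
    define w where "w = (\<lambda>a. z [a])"
    have zw: "z = f1 N w" using z unfolding c1_Z2 w_def by blast
    obtain s where s: "\<forall>a<N. \<forall>b<N. D a (w b) - D b (w a) = J a b *\<^sub>R s" using z unfolding c1_Z2 w_def by blast
    have u0: "D c s = T (w c)" if "c < N" for c by (rule u_lemma1[OF _ that]) (use s in auto)
    define w' where "w' y = (if y < N then w y else s)" for y
    have x1: "f1 (Suc N) w' \<in> cyc (ce_sp n) (\<lambda>_. ce_d n J D T) 1"
    proof (rule c1_Z1_intro)
      fix x y assume xy: "x < Suc N" "y < Suc N"
      then have "x < N \<or> x = N" "y < N \<or> y = N" by auto
      then show "rho n D T x (w' y) - rho n D T y (w' x) - Jh n J x y *\<^sub>R w' N = 0"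
        using s u0 unfolding w'_def by (auto simp: T_diff)
    qed
    have fx: "f (f1 (Suc N) w') = z" unfolding f_def zw w'_def by (rule f1_cong) simp
    have "(\<lambda>i. z i - f (f1 (Suc N) w') i) = eth n D (f0 0)"
      unfolding fx eth_f0 by (simp add: D_zero f1_def fun_eq_iff split: list.split)
    then show "\<exists>x\<in>cyc (ce_sp n) (\<lambda>_. ce_d n J D T) 1. (\<lambda>i. z i - f x i) \<in> eth n D ` rsp n J 0"
      using x1 rsp0 by blast
  next
    fix x assume x: "x \<in> cyc (ce_sp n) (\<lambda>_. ce_d n J D T) 1" and fx: "f x \<in> eth n D ` rsp n J 0"
    then obtain \<omega>0 where \<omega>0: "\<omega>0 \<in> rsp n J 0" and e0: "f x = eth n D \<omega>0" by blast
    define v where "v = \<omega>0 []"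
    have e: "\<omega>0 = f0 v" using \<omega>0 alt_eq0 unfolding rsp_def v_def by blast
    have xa: "x [a] = D a v" if "a < N" for a
    proof -
      have "f x [a] = eth n D (f0 v) [a]" using e0 e by simp
      then show ?thesis using that unfolding f_def eth_f0 by simp
    qed
    obtain a b where ab: "a < N" "b < N" "J a b \<noteq> 0" using J_nz by blast
    have "J a b *\<^sub>R x [N] = D a (x [b]) - D b (x [a])" using c1_Z1(2)[OF x, of a b] ab by simp
    also have "\<dots> = J a b *\<^sub>R T v" using xa ab rep_bracket by simp
    finally have xN: "x [N] = T v" using ab by simp
    have "x = f1 (Suc N) (\<lambda>a. x [a])" by (rule c1_Z1(1)[OF x])
    also have "\<dots> = f1 (Suc N) (\<lambda>y. rho n D T y v)"
    proof (rule f1_cong)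
      fix y assume "y < Suc N"
      then have "y < N \<or> y = N" by auto
      then show "x [y] = rho n D T y v" using xa xN by auto
    qed
    also have "\<dots> = ce_d n J D T (f0 v)" by (simp add: ce_f0)
    finally show "x \<in> ce_d n J D T ` ce_sp n 0" unfolding ce_sp_def using alt_f0 by blast
  qed
qed

end

context heis begin

lemma alt_f2':
  assumes "\<And>a b. a < N' \<Longrightarrow> b < N' \<Longrightarrow> g a b = - g b a"
  shows "alt_form N' (Suc (Suc 0)) (f2 N' g)"
proof -
  have "alt_form N' 2 (f2 N' g)" by (rule alt_f2) (rule assms)
  then show ?thesis by (simp add: numeral_2_eq_2)
qed

lemma c2_Z1:
  assumes "\<omega> \<in> cyc (ce_sp n) (\<lambda>_. ce_d n J D T) 2"
  shows "\<omega> = f2 (Suc N) (\<lambda>a b. \<omega> [a, b])"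
    "\<And>a b. \<omega> [a, b] = - \<omega> [b, a]"
    "\<And>x y z. x < Suc N \<Longrightarrow> y < Suc N \<Longrightarrow> z < Suc N \<Longrightarrow>
       rho n D T x (\<omega> [y, z]) - rho n D T y (\<omega> [x, z]) + rho n D T z (\<omega> [x, y])
      - Jh n J x y *\<^sub>R \<omega> [N, z] + Jh n J x z *\<^sub>R \<omega> [N, y] - Jh n J y z *\<^sub>R \<omega> [N, x] = 0"
proof -
  have alt: "alt_form (Suc N) 2 \<omega>" and z: "\<forall>xs. ce_d n J D T \<omega> xs = 0"
    using assms unfolding cyc_def ce_sp_def by auto
  show w: "\<omega> = f2 (Suc N) (\<lambda>a b. \<omega> [a, b])" using alt_eq2[OF alt] .
  show "\<And>a b. \<omega> [a, b] = - \<omega> [b, a]" using alt2_anti[OF alt] .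
  have "ce_d n J D T (f2 (Suc N) (\<lambda>a b. \<omega> [a, b])) = (\<lambda>_. 0)" using z w allzero by metis
  then have "\<forall>x<Suc N. \<forall>y<Suc N. \<forall>z<Suc N. rho n D T x (\<omega> [y, z]) - rho n D T y (\<omega> [x, z]) + rho n D T z (\<omega> [x, y])
      - Jh n J x y *\<^sub>R \<omega> [N, z] + Jh n J x z *\<^sub>R \<omega> [N, y] - Jh n J y z *\<^sub>R \<omega> [N, x] = 0"
    unfolding ce_f2 f3_zero_iff .
  then show "\<And>x y z. x < Suc N \<Longrightarrow> y < Suc N \<Longrightarrow> z < Suc N \<Longrightarrow>
       rho n D T x (\<omega> [y, z]) - rho n D T y (\<omega> [x, z]) + rho n D T z (\<omega> [x, y])
      - Jh n J x y *\<^sub>R \<omega> [N, z] + Jh n J x z *\<^sub>R \<omega> [N, y] - Jh n J y z *\<^sub>R \<omega> [N, x] = 0"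
    by blast
qed

lemma c2_Z1_intro:
  assumes anti: "\<And>a b. a < Suc N \<Longrightarrow> b < Suc N \<Longrightarrow> W a b = - W b a"
    and H: "\<And>x y z. x < Suc N \<Longrightarrow> y < Suc N \<Longrightarrow> z < Suc N \<Longrightarrow>
       rho n D T x (W y z) - rho n D T y (W x z) + rho n D T z (W x y)
      - Jh n J x y *\<^sub>R W N z + Jh n J x z *\<^sub>R W N y - Jh n J y z *\<^sub>R W N x = 0"
  shows "f2 (Suc N) W \<in> cyc (ce_sp n) (\<lambda>_. ce_d n J D T) 2"
proof -
  have "ce_d n J D T (f2 (Suc N) W) = (\<lambda>_. 0)" unfolding ce_f2 f3_zero_iff using H by blast
  moreover have "alt_form (Suc N) 2 (f2 (Suc N) W)" by (rule alt_f2) (rule anti)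
  ultimately show ?thesis unfolding cyc_def ce_sp_def by simp
qed

lemma eth2_f3: "eth n D (f2 N \<tau>) = f3 N (\<lambda>a b c. D a (\<tau> b c) - D b (\<tau> a c) + D c (\<tau> a b))"
  by (rule eth_f2)

lemma eth2_alt:
  assumes anti: "\<And>a b. a < N \<Longrightarrow> b < N \<Longrightarrow> \<tau> a b = - \<tau> b a"
  shows "alt_form N 3 (eth n D (f2 N \<tau>))"
  unfolding eth_f2
proof (rule alt_f3)
  fix a b c assume abc: "a < N" "b < N" "c < N"
  show "D a (\<tau> b c) - D b (\<tau> a c) + D c (\<tau> a b) = - (D b (\<tau> a c) - D a (\<tau> b c) + D c (\<tau> b a))"
    using abc anti[of b a] by (simp add: D_neg)
  show "D a (\<tau> b c) - D b (\<tau> a c) + D c (\<tau> a b) = - (D a (\<tau> c b) - D c (\<tau> a b) + D b (\<tau> a c))"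
    using abc anti[of c b] by (simp add: D_neg)
  show "D a (\<tau> b c) - D b (\<tau> a c) + D c (\<tau> a b) = - (D c (\<tau> b a) - D b (\<tau> c a) + D a (\<tau> c b))"
    using abc anti[of c b] anti[of c a] anti[of b a] by (simp add: D_neg)
qed

lemma c2_Z2:
  "\<omega> \<in> cyc (rsp n J) (rd n J D) 2 \<longleftrightarrow>
     alt_form N 2 \<omega> \<and> trace_free n J 2 \<omega> \<and> tf_part n J 3 (eth n D \<omega>) = (\<lambda>_. 0)"
proof -
  have rd2: "rd n J D 2 \<omega> = tf_part n J 3 (eth n D \<omega>)" by (simp add: rd_def numeral_3_eq_3 numeral_2_eq_2)
  show ?thesis unfolding cyc_def rsp_def by (simp only: mem_Collect_eq rd2 allzero conj_assoc)
qed


definition f2map :: "(nat list \<Rightarrow> 'v) \<Rightarrow> nat list \<Rightarrow> 'v" where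
  "f2map \<omega> = tf_part n J 2 (f2 N (\<lambda>a b. \<omega> [a, b]))"

lemma c2_C1:
  assumes \<omega>: "\<omega> \<in> cyc (ce_sp n) (\<lambda>_. ce_d n J D T) 2" and abc: "a < N" "b < N" "c < N"
  shows "D a (\<omega> [b, c]) - D b (\<omega> [a, c]) + D c (\<omega> [a, b])
      = J a b *\<^sub>R \<omega> [N, c] - J a c *\<^sub>R \<omega> [N, b] + J b c *\<^sub>R \<omega> [N, a]"
proof -
  have "D a (\<omega> [b, c]) - D b (\<omega> [a, c]) + D c (\<omega> [a, b])
      - J a b *\<^sub>R \<omega> [N, c] + J a c *\<^sub>R \<omega> [N, b] - J b c *\<^sub>R \<omega> [N, a] = 0"
    using c2_Z1(3)[OF \<omega>, of a b c] abc by simp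
  then show ?thesis by (simp add: algebra_simps)
qed

lemma c2_fZ:
  assumes \<omega>: "\<omega> \<in> cyc (ce_sp n) (\<lambda>_. ce_d n J D T) 2"
  shows "f2map \<omega> \<in> cyc (rsp n J) (rd n J D) 2"
proof -
  define W where "W = (\<lambda>a b. \<omega> [a, b])"
  define \<psi> where "\<psi> = (\<lambda>c. \<omega> [N, c])"
  have anti: "W a b = - W b a" if "a < N" "b < N" for a b
    unfolding W_def by (rule c2_Z1(2)[OF \<omega>])
  have altP: "alt_form N 2 (f2 N W)" by (rule alt_f2) (rule anti)
  define \<tau> where "\<tau> = tf_part n J 2 (f2 N W)"
  obtain s where A: "alt_form N 2 \<tau>" "trace_free n J 2 \<tau>" and s: "\<forall>xs. f2 N W xs = \<tau> xs + jwedge n J (f0 s) xs"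
    using tf2_char[OF altP] unfolding \<tau>_def by blast
  have \<tau>v: "\<tau> = f2 N (\<lambda>a b. W a b - J a b *\<^sub>R s)"
  proof -
    have "\<tau> = f2 N (\<lambda>a b. \<tau> [a, b])" by (rule alt_eq2[OF A(1)])
    also have "\<dots> = f2 N (\<lambda>a b. W a b - J a b *\<^sub>R s)"
    proof (rule f2_cong)
      fix a b assume ab: "a < N" "b < N"
      have "f2 N W [a, b] = \<tau> [a, b] + jwedge n J (f0 s) [a, b]" using s by blast
      then show "\<tau> [a, b] = W a b - J a b *\<^sub>R s" using ab by (simp add: jw_2)
    qed
    finally show ?thesis .
  qed
  have "eth n D \<tau> = jwedge n J (f1 N (\<lambda>c. \<psi> c - D c s))"
    unfolding \<tau>v eth_f2 jw_f1
  proof (rule f3_cong)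
    fix a b c assume abc: "a < N" "b < N" "c < N"
    have C: "D a (W b c) - D b (W a c) + D c (W a b) = J a b *\<^sub>R \<psi> c - J a c *\<^sub>R \<psi> b + J b c *\<^sub>R \<psi> a"
      unfolding W_def \<psi>_def by (rule c2_C1[OF \<omega> abc])
    have "D a (W b c - J b c *\<^sub>R s) - D b (W a c - J a c *\<^sub>R s) + D c (W a b - J a b *\<^sub>R s)
      = (D a (W b c) - D b (W a c) + D c (W a b)) - (J b c *\<^sub>R D a s - J a c *\<^sub>R D b s + J a b *\<^sub>R D c s)"
      using abc by (simp add: D_diff D_scale algebra_simps)
    also have "\<dots> = J a b *\<^sub>R (\<psi> c - D c s) - J a c *\<^sub>R (\<psi> b - D b s) + J b c *\<^sub>R (\<psi> a - D a s)"
      unfolding C by (simp add: algebra_simps)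
    finally show "D a (W b c - J b c *\<^sub>R s) - D b (W a c - J a c *\<^sub>R s) + D c (W a b - J a b *\<^sub>R s)
      = J a b *\<^sub>R (\<psi> c - D c s) - J a c *\<^sub>R (\<psi> b - D b s) + J b c *\<^sub>R (\<psi> a - D a s)" .
  qed
  then have "tf_part n J 3 (eth n D \<tau>) = (\<lambda>_. 0)" by (simp add: tf3_jwz)
  then have "\<tau> \<in> cyc (rsp n J) (rd n J D) 2" unfolding c2_Z2 using A by blast
  then show ?thesis unfolding f2map_def \<tau>_def W_def .
qed

lemma c2_fB:
  assumes \<eta>: "\<eta> \<in> ce_sp n 1"
  shows "f2map (ce_d n J D T \<eta>) \<in> rd n J D 1 ` rsp n J 1"
proof -
  define w where "w = (\<lambda>a. \<eta> [a])"
  have e: "\<eta> = f1 (Suc N) w" using alt_eq1[of "Suc N" \<eta>] \<eta> unfolding ce_sp_def w_def by simp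
  have "f2 N (\<lambda>a b. ce_d n J D T \<eta> [a, b]) = f2 N (\<lambda>a b. (D a (w b) - D b (w a)) + J a b *\<^sub>R (- w N))"
  proof (rule f2_cong)
    fix a b assume "a < N" "b < N"
    then show "ce_d n J D T \<eta> [a, b] = (D a (w b) - D b (w a)) + J a b *\<^sub>R (- w N)"
      unfolding e ce_f1 by simp
  qed
  also have "\<dots> = (\<lambda>xs. eth n D (f1 N w) xs + jwedge n J (f0 (- w N)) xs)"
    unfolding f2_add eth_f1 jw_f0 ..
  finally have "f2map (ce_d n J D T \<eta>) = tf_part n J 2 (eth n D (f1 N w))"
    unfolding f2map_def by (intro tf2_plus_jw[OF eth1_alt]) simp
  also have "\<dots> = rd n J D 1 (f1 N w)" by (simp add: rd_def numeral_2_eq_2)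
  finally show ?thesis unfolding rsp_def using alt_f1[of N w] trf01(2)[of "f1 N w"] by blast
qed

end

context heis begin

lemma rho_top'[simp]: "rho n' D' T' (n' * 2) = T'" by (simp add: rho_def)
lemma Jh_top1'[simp]: "Jh n' J' (n' * 2) b = 0" by (simp add: Jh_def)
lemma Jh_top2'[simp]: "Jh n' J' a (n' * 2) = 0" by (simp add: Jh_def)

lemma zero_rd1: "(\<lambda>_. 0) \<in> rd n J D 1 ` rsp n J 1"
proof -
  have z1: "(\<lambda>_. 0 :: 'v) = f1 N (\<lambda>_. 0)" using f1_zero_iff[of N "\<lambda>_. 0 :: 'v"] by simp
  have "eth n D (\<lambda>_. 0 :: 'v) = f2 N (\<lambda>a b. D a 0 - D b 0)" unfolding z1 eth_f1 ..
  also have "\<dots> = (\<lambda>_. 0)" unfolding f2_zero_iff by (simp add: D_zero)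
  finally have e: "eth n D (\<lambda>_. 0 :: 'v) = (\<lambda>_. 0)" .
  have "rd n J D 1 (\<lambda>_. 0) = tf_part n J 2 (\<lambda>_. 0 :: 'v)" by (simp add: rd_def numeral_2_eq_2 e)
  also have "\<dots> = (\<lambda>_. 0)" by (rule tf2_self) (simp_all add: alt_zero trf_zero)
  finally have "rd n J D 1 (\<lambda>_. 0) = (\<lambda>_. 0 :: 'v)" .
  moreover have "(\<lambda>_. 0 :: 'v) \<in> rsp n J 1" unfolding rsp_def by (simp add: alt_zero trf_zero)
  ultimately show ?thesis by (metis image_eqI)
qed

lemma c2_surj:
  assumes z: "z \<in> cyc (rsp n J) (rd n J D) 2"
  shows "\<exists>x\<in>cyc (ce_sp n) (\<lambda>_. ce_d n J D T) 2. (\<lambda>i. z i - f2map x i) \<in> rd n J D 1 ` rsp n J 1"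
proof -
  have altz: "alt_form N 2 z" and trz: "trace_free n J 2 z" and tz: "tf_part n J 3 (eth n D z) = (\<lambda>_. 0)"
    using z unfolding c2_Z2 by auto
  define \<tau> where "\<tau> = (\<lambda>a b. z [a, b])"
  have z\<tau>: "z = f2 N \<tau>" unfolding \<tau>_def by (rule alt_eq2[OF altz])
  have anti: "\<tau> a b = - \<tau> b a" if "a < N" "b < N" for a b
    unfolding \<tau>_def by (rule alt2_anti[OF altz])
  obtain g where g: "\<forall>xs. eth n D z xs = tf_part n J 3 (eth n D z) xs + jwedge n J (f1 N g) xs"
    using tf3_char[OF eth2_alt[of \<tau>, OF anti]] z\<tau> by blast
  have E: "D a (\<tau> b c) - D b (\<tau> a c) + D c (\<tau> a b) = J a b *\<^sub>R g c - J a c *\<^sub>R g b + J b c *\<^sub>R g a"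
    if abc: "a < N" "b < N" "c < N" for a b c
  proof -
    have "eth n D z [a, b, c] = jwedge n J (f1 N g) [a, b, c]" using g tz by simp
    then show ?thesis using abc unfolding z\<tau> eth_f2 jw_f1 by simp
  qed
  have K: "D a (g b) - D b (g a) = T (\<tau> a b)" if "a < N" "b < N" for a b
    by (rule keyK[of \<tau> g, OF anti E that])
  define X where "X a b = (if a < N \<and> b < N then \<tau> a b else if a < N \<and> b = N then - g a
      else if a = N \<and> b < N then g b else 0)" for a b
  have XN: "X N N = 0" "\<And>a. a < N \<Longrightarrow> X a N = - g a" "\<And>b. b < N \<Longrightarrow> X N b = g b"
    "\<And>a b. a < N \<Longrightarrow> b < N \<Longrightarrow> X a b = \<tau> a b" unfolding X_def by auto
  have xZ: "f2 (Suc N) X \<in> cyc (ce_sp n) (\<lambda>_. ce_d n J D T) 2"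
  proof (rule c2_Z1_intro)
    fix a b assume "a < Suc N" "b < Suc N"
    then have "a < N \<or> a = N" "b < N \<or> b = N" by auto
    then show "X a b = - X b a"
    proof (elim disjE)
      assume ab: "a < N" "b < N"
      have "\<tau> a b = - \<tau> b a" by (rule anti[OF ab])
      then show ?thesis using XN(4)[OF ab] XN(4)[OF ab(2,1)] by simp
    qed (simp_all add: XN(1-3))
  next
    fix x y w assume xyw: "x < Suc N" "y < Suc N" "w < Suc N"
    then have cx: "x < N \<or> x = N" and cy: "y < N \<or> y = N" and cw: "w < N \<or> w = N" by auto
    show "rho n D T x (X y w) - rho n D T y (X x w) + rho n D T w (X x y)
      - Jh n J x y *\<^sub>R X N w + Jh n J x w *\<^sub>R X N y - Jh n J y w *\<^sub>R X N x = 0"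
    proof (cases "x < N")
      case x: True
      show ?thesis
      proof (cases "y < N")
        case y: True
        show ?thesis
        proof (cases "w < N")
          case w: True
          show ?thesis using E[OF x y w] x y w XN by (simp add: algebra_simps)
        next
          case False then have w: "w = N" using cw by simp
          show ?thesis using K[OF x y] x y XN by (simp add: w D_neg algebra_simps)
        qed
      next
        case False then have y: "y = N" using cy by simp
        show ?thesis
        proof (cases "w < N")
          case w: True
          show ?thesis using K[OF x w] x w XN by (simp add: y D_neg algebra_simps)
        next
          case False then have w: "w = N" using cw by simp
          show ?thesis using x XN by (simp add: y w D_zero T_neg)
        qed
      qed
    next
      case False then have x: "x = N" using cx by simp
      show ?thesis
      proof (cases "y < N")
        case y: True
        show ?thesis
        proof (cases "w < N")
          case w: True
          show ?thesis using K[OF y w] y w XN by (simp add: x algebra_simps)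
        next
          case False then have w: "w = N" using cw by simp
          show ?thesis using y XN by (simp add: x w D_zero T_neg)
        qed
      next
        case False then have y: "y = N" using cy by simp
        show ?thesis
        proof (cases "w < N")
          case w: True
          show ?thesis using w XN by (simp add: x y D_zero)
        next
          case False then have w: "w = N" using cw by simp
          show ?thesis using XN by (simp add: x y w T_zero)
        qed
      qed
    qed
  qed
  have fx: "f2map (f2 (Suc N) X) = z"
  proof -
    have "f2 N (\<lambda>a b. f2 (Suc N) X [a, b]) = z" unfolding z\<tau> by (rule f2_cong) (simp add: XN)
    then show ?thesis unfolding f2map_def using tf2_self[OF altz trz] by simp
  qed
  have "(\<lambda>i. z i - f2map (f2 (Suc N) X) i) = (\<lambda>_. 0)" unfolding fx by simp
  then show ?thesis using xZ zero_rd1 by metis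
qed

end

context heis begin

lemma c2_inj:
  assumes x: "x \<in> cyc (ce_sp n) (\<lambda>_. ce_d n J D T) 2" and fx: "f2map x \<in> rd n J D 1 ` rsp n J 1"
  shows "x \<in> ce_d n J D T ` ce_sp n 1"
proof -
  obtain \<omega>' where \<omega>': "\<omega>' \<in> rsp n J 1" and e: "f2map x = rd n J D 1 \<omega>'" using fx by blast
  define w where "w = (\<lambda>a. \<omega>' [a])"
  have \<omega>'w: "\<omega>' = f1 N w" unfolding w_def using alt_eq1[of N \<omega>'] \<omega>' unfolding rsp_def by simp
  define W where "W = (\<lambda>a b. x [a, b])"
  define \<psi> where "\<psi> = (\<lambda>c. x [N, c])"
  have anti: "W a b = - W b a" if "a < N" "b < N" for a b
    unfolding W_def by (rule c2_Z1(2)[OF x])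
  have altW: "alt_form N 2 (f2 N W)" by (rule alt_f2) (rule anti)
  obtain s1 where s1: "\<forall>xs. f2 N W xs = tf_part n J 2 (f2 N W) xs + jwedge n J (f0 s1) xs"
    using tf2_char[OF altW] by blast
  obtain s2 where s2: "\<forall>xs. eth n D (f1 N w) xs = tf_part n J 2 (eth n D (f1 N w)) xs + jwedge n J (f0 s2) xs"
    using tf2_char[OF eth1_alt[of w]] by blast
  have eqtf: "tf_part n J 2 (f2 N W) = tf_part n J 2 (eth n D (f1 N w))"
    using e unfolding f2map_def W_def \<omega>'w by (simp add: rd_def numeral_2_eq_2)
  define \<phi> where "\<phi> = s1 - s2"
  have Wv: "W a b = D a (w b) - D b (w a) + J a b *\<^sub>R \<phi>" if ab: "a < N" "b < N" for a b
  proof -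
    have 1: "W a b = tf_part n J 2 (f2 N W) [a, b] + J a b *\<^sub>R s1"
    proof -
      have "f2 N W [a, b] = tf_part n J 2 (f2 N W) [a, b] + jwedge n J (f0 s1) [a, b]" using s1 by blast
      then show ?thesis using ab by (simp add: jw_2)
    qed
    have 2: "D a (w b) - D b (w a) = tf_part n J 2 (f2 N W) [a, b] + J a b *\<^sub>R s2"
    proof -
      have "eth n D (f1 N w) [a, b] = tf_part n J 2 (eth n D (f1 N w)) [a, b] + jwedge n J (f0 s2) [a, b]"
        using s2 by blast
      then show ?thesis using ab eqtf unfolding eth_f1 by (simp add: jw_2)
    qed
    show ?thesis using 1 2 unfolding \<phi>_def by (simp add: algebra_simps)
  qed
  have \<psi>v: "\<psi> c = T (w c) + D c \<phi>" if c: "c < N" for c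
  proof -
    define u where "u c = \<psi> c - T (w c) - D c \<phi>" for c
    have "u c = 0"
    proof (rule Jinj1[OF _ c])
      fix a b c assume abc: "a < N" "b < N" "c < N"
      have C: "D a (W b c) - D b (W a c) + D c (W a b) = J a b *\<^sub>R \<psi> c - J a c *\<^sub>R \<psi> b + J b c *\<^sub>R \<psi> a"
        unfolding W_def \<psi>_def by (rule c2_C1[OF x abc])
      have b1: "D a (D b (w c)) = D b (D a (w c)) + J a b *\<^sub>R T (w c)" using brk abc by blast
      have b2: "D a (D c (w b)) = D c (D a (w b)) + J a c *\<^sub>R T (w b)" using brk abc by blast
      have b3: "D b (D c (w a)) = D c (D b (w a)) + J b c *\<^sub>R T (w a)" using brk abc by blast
      have Q: "D a (W b c) - D b (W a c) + D c (W a b)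
          = (J a b *\<^sub>R T (w c) - J a c *\<^sub>R T (w b) + J b c *\<^sub>R T (w a))
          + (J b c *\<^sub>R D a \<phi> - J a c *\<^sub>R D b \<phi> + J a b *\<^sub>R D c \<phi>)"
        using abc by (simp add: Wv D_add D_diff D_scale b1 b2 b3 algebra_simps)
      have eq: "J a b *\<^sub>R \<psi> c - J a c *\<^sub>R \<psi> b + J b c *\<^sub>R \<psi> a
          = (J a b *\<^sub>R T (w c) - J a c *\<^sub>R T (w b) + J b c *\<^sub>R T (w a))
          + (J b c *\<^sub>R D a \<phi> - J a c *\<^sub>R D b \<phi> + J a b *\<^sub>R D c \<phi>)"
        using C[symmetric] Q by (rule trans)
      have "J a b *\<^sub>R u c - J a c *\<^sub>R u b + J b c *\<^sub>R u a
        = (J a b *\<^sub>R \<psi> c - J a c *\<^sub>R \<psi> b + J b c *\<^sub>R \<psi> a)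
          - ((J a b *\<^sub>R T (w c) - J a c *\<^sub>R T (w b) + J b c *\<^sub>R T (w a))
          + (J b c *\<^sub>R D a \<phi> - J a c *\<^sub>R D b \<phi> + J a b *\<^sub>R D c \<phi>))"
        unfolding u_def by (simp add: algebra_simps)
      also have "\<dots> = 0" using eq by simp
      finally show "J a b *\<^sub>R u c - J a c *\<^sub>R u b + J b c *\<^sub>R u a = 0" .
    qed
    then show ?thesis unfolding u_def by (simp add: algebra_simps)
  qed
  define w' where "w' y = (if y < N then w y else - \<phi>)" for y
  have xNN: "x [N, N] = 0" using c2_Z1(2)[OF x, of N N] neg_self_zero by blast
  have "x = f2 (Suc N) (\<lambda>a b. x [a, b])" by (rule c2_Z1(1)[OF x])
  also have "\<dots> = f2 (Suc N) (\<lambda>a b. rho n D T a (w' b) - rho n D T b (w' a) - Jh n J a b *\<^sub>R w' N)"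
  proof (rule f2_cong)
    fix a b assume "a < Suc N" "b < Suc N"
    then have ca: "a < N \<or> a = N" and cb: "b < N \<or> b = N" by auto
    show "x [a, b] = rho n D T a (w' b) - rho n D T b (w' a) - Jh n J a b *\<^sub>R w' N"
    proof (cases "a < N")
      case a: True
      show ?thesis
      proof (cases "b < N")
        case b: True
        show ?thesis using Wv[OF a b] a b unfolding W_def w'_def by simp
      next
        case False then have b: "b = N" using cb by simp
        have "x [a, N] = - x [N, a]" by (rule c2_Z1(2)[OF x])
        then show ?thesis using \<psi>v[OF a] a unfolding b \<psi>_def w'_def by (simp add: D_neg)
      qed
    next
      case False then have a: "a = N" using ca by simp
      show ?thesis
      proof (cases "b < N")
        case b: True
        show ?thesis using \<psi>v[OF b] b unfolding a \<psi>_def w'_def by (simp add: D_neg)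
      next
        case False then have b: "b = N" using cb by simp
        show ?thesis using xNN unfolding a b w'_def by simp
      qed
    qed
  qed
  also have "\<dots> = ce_d n J D T (f1 (Suc N) w')" by (simp add: ce_f1)
  finally show ?thesis unfolding ce_sp_def using alt_f1[of "Suc N" w'] by blast
qed

lemma c2_add:
  assumes "x \<in> cyc (ce_sp n) (\<lambda>_. ce_d n J D T) 2" "y \<in> cyc (ce_sp n) (\<lambda>_. ce_d n J D T) 2"
  shows "f2map (\<lambda>i. x i + y i) = (\<lambda>i. f2map x i + f2map y i)"
proof -
  have ax: "alt_form N 2 (f2 N (\<lambda>a b. x [a, b]))" by (rule alt_f2) (rule c2_Z1(2)[OF assms(1)])
  have ay: "alt_form N 2 (f2 N (\<lambda>a b. y [a, b]))" by (rule alt_f2) (rule c2_Z1(2)[OF assms(2)])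
  show ?thesis unfolding f2map_def f2_add by (rule tf2_add[OF ax ay])
qed

lemma c2_scale:
  assumes "x \<in> cyc (ce_sp n) (\<lambda>_. ce_d n J D T) 2"
  shows "f2map (\<lambda>i. c *\<^sub>R x i) = (\<lambda>i. c *\<^sub>R f2map x i)"
proof -
  have ax: "alt_form N 2 (f2 N (\<lambda>a b. x [a, b]))" by (rule alt_f2) (rule c2_Z1(2)[OF assms(1)])
  show ?thesis unfolding f2map_def f2_scale by (rule tf2_scale[OF ax])
qed

lemma case2: "quot_iso (cyc (ce_sp n) (\<lambda>_. ce_d n J D T) 2) (bdry (ce_sp n) (\<lambda>_. ce_d n J D T) 2)
            (cyc (rsp n J) (rd n J D) 2) (bdry (rsp n J) (rd n J D) 2)"
proof -
  have B1: "bdry (ce_sp n) (\<lambda>_. ce_d n J D T) 2 = ce_d n J D T ` ce_sp n 1" by (simp add: bdry_def)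
  have B2: "bdry (rsp n J) (rd n J D) 2 = rd n J D 1 ` rsp n J 1" by (simp add: bdry_def)
  show ?thesis unfolding quot_iso_def B1 B2
  proof (intro exI[of _ f2map] conjI ballI allI impI)
    fix x y assume "x \<in> cyc (ce_sp n) (\<lambda>_. ce_d n J D T) 2" "y \<in> cyc (ce_sp n) (\<lambda>_. ce_d n J D T) 2"
    then show "f2map (\<lambda>i. x i + y i) = (\<lambda>i. f2map x i + f2map y i)" by (rule c2_add)
  next
    fix c x assume "x \<in> cyc (ce_sp n) (\<lambda>_. ce_d n J D T) 2"
    then show "f2map (\<lambda>i. c *\<^sub>R x i) = (\<lambda>i. c *\<^sub>R f2map x i)" by (rule c2_scale)
  next
    show "f2map ` cyc (ce_sp n) (\<lambda>_. ce_d n J D T) 2 \<subseteq> cyc (rsp n J) (rd n J D) 2"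
      using c2_fZ by blast
  next
    show "f2map ` ce_d n J D T ` ce_sp n 1 \<subseteq> rd n J D 1 ` rsp n J 1"
      using c2_fB by blast
  next
    fix z assume "z \<in> cyc (rsp n J) (rd n J D) 2"
    then show "\<exists>x\<in>cyc (ce_sp n) (\<lambda>_. ce_d n J D T) 2. (\<lambda>i. z i - f2map x i) \<in> rd n J D 1 ` rsp n J 1"
      by (rule c2_surj)
  next
    fix x assume "x \<in> cyc (ce_sp n) (\<lambda>_. ce_d n J D T) 2" "f2map x \<in> rd n J D 1 ` rsp n J 1"
    then show "x \<in> ce_d n J D T ` ce_sp n 1" by (rule c2_inj)
  qed
qed

end

theorem proposition17:
  fixes n :: nat and J :: "nat \<Rightarrow> nat \<Rightarrow> real"
    and D :: "nat \<Rightarrow> 'v::real_vector \<Rightarrow> 'v" and T :: "'v \<Rightarrow> 'v"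
  assumes n3: "n \<ge> 3"
    and J_skew: "\<forall>a<2 * n. \<forall>b<2 * n. J a b = - J b a"
    and J_nondeg: "\<forall>x :: nat \<Rightarrow> real. (\<forall>b<2 * n. (\<Sum>a<2 * n. x a * J a b) = 0) \<longrightarrow> (\<forall>a<2 * n. x a = 0)"
    and D_lin: "\<forall>a<2 * n. linear (D a)"
    and T_lin: "linear T"
    and rep_bracket: "\<forall>a<2 * n. \<forall>b<2 * n. \<forall>v. D a (D b v) - D b (D a v) = J a b *\<^sub>R T v"
    and rep_centre: "\<forall>a<2 * n. \<forall>v. D a (T v) = T (D a v)"
  shows "\<forall>r\<le>2. quot_iso
            (cyc (ce_sp n) (\<lambda>_. ce_d n J D T) r) (bdry (ce_sp n) (\<lambda>_. ce_d n J D T) r)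
            (cyc (rsp n J) (rd n J D) r) (bdry (rsp n J) (rd n J D) r)"
proof -
  have H: "heis n J D T" unfolding heis_def using assms by blast
  interpret heis n J D T by (rule H)
  show ?thesis
  proof (intro allI impI)
    fix r :: nat assume "r \<le> 2"
    then have "r = 0 \<or> r = 1 \<or> r = 2" by auto
    then show "quot_iso
            (cyc (ce_sp n) (\<lambda>_. ce_d n J D T) r) (bdry (ce_sp n) (\<lambda>_. ce_d n J D T) r)
            (cyc (rsp n J) (rd n J D) r) (bdry (rsp n J) (rd n J D) r)"
      using case0 case1 case2 by blast
  qed
qed

end
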